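(* Let $H$ be the Torricelli trumpet of parameter $\beta>0$ (surface of revolution of $r(z)=z^{-\beta}$, $z\ge z_0$, with $r_0=r(z_0)$), with rotation function $\Delta\theta(\varphi_0)$. Let $\kappa(\varphi_0)=\Delta\theta'(\varphi_0)$ and $\omega(\varphi_0)=\frac{2+\kappa(\varphi_0)}{\cos\varphi_0}$. Then: 1. $\kappa$ is smooth on $(-\pi/2,\pi/2)\setminus\{0\}$, and for all such $\varphi_0$ $$\kappa(\varphi_0)\le-2\sqrt{1+\beta^{-2}r_0^{-2(1+\beta)/\beta}}<-2.$$ In particular $\kappa(\varphi_0)\notin[-2,0]$, and hence $\omega<0$. 2. $\kappa(\varphi_0)\to-\infty$ as $\varphi_0\to0$, and $\kappa(\varphi_0)\to-2\sqrt{1+\beta^{-2}r_0^{-2(1+\beta)/\beta}}$ as $\varphi_0\to\pm\pi/2$. 3. $|\kappa'(\varphi_0)|=O(|2+\kappa(\varphi_0)|^3)$ as $\varphi_0\to0$. 4. $\omega$ is monotone on one-sided neighborhoods $[-\varepsilon,0)$ and $(0,\varepsilon]$ of $0$, for some $\varepsilon>0$.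
   Context: The trumpet is the surface $(r(z)\cos\theta,r(z)\sin\theta,z)$, $z\ge z_0$. A unit-speed geodesic entering through the boundary circle at angular position $\theta_0$ with angle $\varphi_0$ to the inward meridian exits at position $\theta_0+\Delta\theta(\varphi_0)$. The rotation function $\Delta\theta(\varphi_0)=2\operatorname{sgn}(\varphi_0)\int_{|\sin\varphi_0|}^1\sqrt{\frac{1+r'(z(r_0|\sin\varphi_0|/u))^{-2}}{1-u^2}}\,du$ is odd in $\varphi_0$. *)

theory Defs
  imports "HOL-Analysis.Analysis" "HOL-Library.Landau_Symbols"
begin

text \<open>Rotation function of the trumpet surface of revolution of the profile r on [z0,\<infinity>),
  following the paper's formula: z is the inverse of r on [z0,\<infinity>), r0 = r z0, and
  r'(z)^{-2} is the inverse of the square of the derivative.\<close>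
definition rotation_fun :: "(real \<Rightarrow> real) \<Rightarrow> real \<Rightarrow> real \<Rightarrow> real" where
  "rotation_fun r z0 \<phi> =
     2 * sgn \<phi> * integral {\<bar>sin \<phi>\<bar>..1}
       (\<lambda>u. sqrt ((1 + inverse ((deriv r (inv_into {z0..} r (r z0 * \<bar>sin \<phi>\<bar> / u)))\<^sup>2))
                   / (1 - u\<^sup>2)))"

definition smooth_on :: "real set \<Rightarrow> (real \<Rightarrow> real) \<Rightarrow> bool" where
  "smooth_on S f \<longleftrightarrow> (\<forall>n. \<forall>x\<in>S. ((deriv ^^ n) f) differentiable (at x))"

end

theory Submission
  imports Defs
begin

coinductive sm :: "real set \<Rightarrow> (real \<Rightarrow> real) \<Rightarrow> bool" for V where
  smI: "(\<And>x. x \<in> V \<Longrightarrow> (f has_real_derivative f' x) (at x)) \<Longrightarrow> sm V f' \<Longrightarrow> sm V f"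

inductive alg :: "real set \<Rightarrow> ((real \<Rightarrow> real) \<Rightarrow> bool) \<Rightarrow> (real \<Rightarrow> real) \<Rightarrow> bool" for V P where
  alg_sm: "sm V f \<Longrightarrow> alg V P f"
| alg_P: "P f \<Longrightarrow> alg V P f"
| alg_add: "alg V P f \<Longrightarrow> alg V P g \<Longrightarrow> alg V P (\<lambda>x. f x + g x)"
| alg_mult: "alg V P f \<Longrightarrow> alg V P g \<Longrightarrow> alg V P (\<lambda>x. f x * g x)"

lemma alg_deriv:
  assumes P: "\<And>f. P f \<Longrightarrow> \<exists>f'. (\<forall>x\<in>V. (f has_real_derivative f' x) (at x)) \<and> alg V P f'"
  shows "alg V P f \<Longrightarrow> \<exists>f'. (\<forall>x\<in>V. (f has_real_derivative f' x) (at x)) \<and> alg V P f'"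
proof (induction rule: alg.induct)
  case (alg_sm f)
  then show ?case by (cases rule: sm.cases) (auto intro: alg.alg_sm)
next
  case (alg_P f) then show ?case by (rule P)
next
  case (alg_add f g)
  then obtain f' g' where "\<forall>x\<in>V. (f has_real_derivative f' x) (at x)" "alg V P f'"
     "\<forall>x\<in>V. (g has_real_derivative g' x) (at x)" "alg V P g'" by blast
  then show ?case
    by (intro exI[of _ "\<lambda>x. f' x + g' x"]) (auto intro!: derivative_eq_intros alg.alg_add)
next
  case (alg_mult f g)
  then obtain f' g' where "\<forall>x\<in>V. (f has_real_derivative f' x) (at x)" "alg V P f'"
     "\<forall>x\<in>V. (g has_real_derivative g' x) (at x)" "alg V P g'" by blast
  with alg_mult.hyps show ?case
    by (intro exI[of _ "\<lambda>x. f' x * g x + f x * g' x"])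
       (auto intro!: derivative_eq_intros alg.alg_add alg.alg_mult)
qed

lemma alg_sm_upto:
  assumes P: "\<And>f. P f \<Longrightarrow> \<exists>f'. (\<forall>x\<in>V. (f has_real_derivative f' x) (at x)) \<and> alg V P f'"
  assumes "alg V P f"
  shows "sm V f"
  using assms(2)
proof (coinduction arbitrary: f rule: sm.coinduct)
  case (sm f)
  from alg_deriv[OF P sm] show ?case by blast
qed

lemma sm_const: "sm V (\<lambda>x. k)"
proof -
  have "alg V (\<lambda>f. \<exists>k. f = (\<lambda>x. k)) (\<lambda>x. k)" by (rule alg_P) blast
  then show ?thesis
    by (rule alg_sm_upto[rotated]) (auto intro!: exI[of _ "\<lambda>x. 0"] alg_P)
qed

lemma sm_add: "sm V f \<Longrightarrow> sm V g \<Longrightarrow> sm V (\<lambda>x. f x + g x)"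
  by (rule alg_sm_upto[of "\<lambda>_. False"]) (auto intro: alg.intros)

lemma sm_mult: "sm V f \<Longrightarrow> sm V g \<Longrightarrow> sm V (\<lambda>x. f x * g x)"
  by (rule alg_sm_upto[of "\<lambda>_. False"]) (auto intro: alg.intros)

lemma sm_minus: "sm V f \<Longrightarrow> sm V (\<lambda>x. - f x)"
  using sm_mult[OF sm_const[of V "-1"]] by simp

lemma sm_diff: "sm V f \<Longrightarrow> sm V g \<Longrightarrow> sm V (\<lambda>x. f x - g x)"
  using sm_add[OF _ sm_minus] by simp

lemma sm_id: "sm V (\<lambda>x. x)"
proof (rule alg_sm_upto[of "\<lambda>f. f = (\<lambda>x. x)"])
  fix f :: "real \<Rightarrow> real" assume "f = (\<lambda>x. x)"
  then show "\<exists>f'. (\<forall>x\<in>V. (f has_real_derivative f' x) (at x)) \<and> alg V (\<lambda>f. f = (\<lambda>x. x)) f'"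
    by (intro exI[of _ "\<lambda>x. 1"]) (auto intro!: alg_sm sm_const)
qed (auto intro: alg_P)

lemma sm_sincos: "sm V sin" "sm V cos"
proof -
  let ?P = "\<lambda>f. f = sin \<or> f = cos"
  have *: "\<exists>f'. (\<forall>x\<in>V. (f has_real_derivative f' x) (at x)) \<and> alg V ?P f'" if "?P f" for f
    using that
  proof
    assume "f = sin" 
    moreover have "alg V ?P cos" by (rule alg_P) auto
    ultimately show ?thesis
      by (intro exI[of _ cos]) (auto intro!: derivative_eq_intros)
  next
    assume "f = cos"
    moreover have "alg V ?P (\<lambda>x. (-1) * sin x)" by (rule alg_mult[OF alg_sm[OF sm_const] alg_P]) simp
    ultimately show ?thesis
      by (intro exI[of _ "\<lambda>x. (-1) * sin x"]) (auto intro!: derivative_eq_intros)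
  qed
  have "alg V ?P sin" "alg V ?P cos" by (rule alg_P, simp)+
  then show "sm V sin" "sm V cos" using alg_sm_upto[where P="?P", OF *] by blast+
qed

lemma sm_powr: assumes "V \<subseteq> {0<..}" shows "sm V (\<lambda>x. x powr a)"
proof -
  let ?P = "\<lambda>f. \<exists>a. f = (\<lambda>x. x powr a)"
  have *: "\<exists>f'. (\<forall>x\<in>V. (f has_real_derivative f' x) (at x)) \<and> alg V ?P f'" if "?P f" for f
  proof -
    from that obtain a where f: "f = (\<lambda>x. x powr a)" by blast
    have "alg V ?P (\<lambda>x. a * x powr (a - 1))" by (rule alg_mult[OF alg_sm[OF sm_const] alg_P]) auto
    moreover have "\<forall>x\<in>V. (f has_real_derivative a * x powr (a - 1)) (at x)"
      using assms f by (auto intro!: derivative_eq_intros)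
    ultimately show ?thesis by (intro exI[of _ "\<lambda>x. a * x powr (a - 1)"]) simp
  qed
  have "alg V ?P (\<lambda>x. x powr a)" by (rule alg_P) blast
  then show ?thesis using alg_sm_upto[where P="?P", OF *] by blast
qed

lemma sm_compose:
  assumes f: "sm V f" and g: "sm W g" and im: "f ` V \<subseteq> W"
  shows "sm V (\<lambda>x. g (f x))"
proof -
  let ?P = "\<lambda>h. \<exists>g. sm W g \<and> h = (\<lambda>x. g (f x))"
  have *: "\<exists>h'. (\<forall>x\<in>V. (h has_real_derivative h' x) (at x)) \<and> alg V ?P h'" if "?P h" for h
  proof -
    from that obtain g where g: "sm W g" and h: "h = (\<lambda>x. g (f x))" by blast
    from g obtain g' where g': "\<And>y. y \<in> W \<Longrightarrow> (g has_real_derivative g' y) (at y)" "sm W g'"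
      by (cases rule: sm.cases) auto
    from f obtain f' where f': "\<And>y. y \<in> V \<Longrightarrow> (f has_real_derivative f' y) (at y)" "sm V f'"
      by (cases rule: sm.cases) auto
    have "alg V ?P (\<lambda>x. g' (f x) * f' x)"
      using g' f' by (intro alg_mult[OF alg_P alg_sm]) auto
    moreover have "\<forall>x\<in>V. (h has_real_derivative g' (f x) * f' x) (at x)"
      using g'(1) f'(1) im h by (auto intro!: DERIV_chain2[where f=g and g=f])
    ultimately show ?thesis by (intro exI[of _ "\<lambda>x. g' (f x) * f' x"]) simp
  qed
  have "alg V ?P (\<lambda>x. g (f x))" by (rule alg_P) (use g in blast)
  then show ?thesis using alg_sm_upto[where P="?P", OF *] by blast
qed

lemma sm_deriv: "sm V f \<Longrightarrow> \<exists>f'. (\<forall>x\<in>V. (f has_real_derivative f' x) (at x)) \<and> sm V f'"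
  by (cases rule: sm.cases) auto

lemma sm_smooth_on:
  assumes "open S" "sm S g" "\<And>x. x \<in> S \<Longrightarrow> f x = g x"
  shows "smooth_on S f"
proof -
  have "\<exists>h. sm S h \<and> (\<forall>x\<in>S. (deriv ^^ n) f x = h x)" for n
  proof (induction n)
    case 0 then show ?case using assms by auto
  next
    case (Suc n)
    then obtain h where h: "sm S h" "\<forall>x\<in>S. (deriv ^^ n) f x = h x" by blast
    from sm_deriv[OF h(1)] obtain h' where h': "\<forall>x\<in>S. (h has_real_derivative h' x) (at x)" "sm S h'"
      by blast
    have "deriv ((deriv ^^ n) f) x = h' x" if "x \<in> S" for x
    proof (rule DERIV_imp_deriv)
      show "((deriv ^^ n) f has_real_derivative h' x) (at x)"
        by (rule has_field_derivative_transform_within_open[OF _ assms(1) that]) (use h h' that in auto)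
    qed
    then show ?case using h' by (intro exI[of _ h']) auto
  qed
  then show ?thesis unfolding smooth_on_def
  proof (intro allI ballI)
    fix n x assume hh: "\<And>n. \<exists>h. sm S h \<and> (\<forall>x\<in>S. (deriv ^^ n) f x = h x)" and x: "x \<in> S"
    obtain h where h: "sm S h" "\<forall>x\<in>S. (deriv ^^ n) f x = h x" using hh by blast
    from sm_deriv[OF h(1)] obtain h' where h': "\<forall>x\<in>S. (h has_real_derivative h' x) (at x)" by blast
    have "((deriv ^^ n) f has_real_derivative h' x) (at x)"
      by (rule has_field_derivative_transform_within_open[OF _ assms(1) x]) (use h h' x in auto)
    then show "(deriv ^^ n) f differentiable at x" using has_field_derivative_imp_has_derivative differentiableI by blast
  qed
qed

locale trump = fixes c p :: real assumes cpos: "c > 0" and ppos: "p > 0"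
begin

definition bf :: "real \<Rightarrow> real \<Rightarrow> real \<Rightarrow> real \<Rightarrow> real" where
  "bf k e X \<psi> = sin \<psi> powr k * (1 + X * sin \<psi> powr p) powr e"
definition xf :: "real \<Rightarrow> real" where "xf \<phi> = c * sin \<phi> powr (-p)"
definition xd :: "real \<Rightarrow> real" where "xd \<phi> = - p * c * sin \<phi> powr (-p) * cos \<phi> / sin \<phi>"
definition Ig :: "real \<Rightarrow> real \<Rightarrow> real \<Rightarrow> real" where
  "Ig k e \<phi> = integral {\<phi>..pi/2} (bf k e (xf \<phi>))"

lemma sin_pos_Icc: "0 < y \<Longrightarrow> y \<le> \<psi> \<Longrightarrow> \<psi> \<le> pi/2 \<Longrightarrow> sin \<psi> > 0"
  by (rule sin_gt_zero) (auto intro: less_le_trans le_less_trans[of _ "pi/2"])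

lemma sin_ne0: "0 < y \<Longrightarrow> y \<le> \<psi> \<Longrightarrow> \<psi> * 2 \<le> pi \<Longrightarrow> sin \<psi> \<noteq> 0"
  using sin_pos_Icc[of y \<psi>] by auto

lemma base_pos: "X \<ge> 0 \<Longrightarrow> 1 + X * s powr p > 0"
  by (simp add: add_pos_nonneg)

lemma base_ne: "X \<ge> 0 \<Longrightarrow> 1 + X * s powr p \<noteq> 0"
  using base_pos[of X s] by simp

lemma cont_bf: "0 < y \<Longrightarrow> continuous_on ({0<..} \<times> {y..pi/2}) (\<lambda>(X,\<psi>). bf k e X \<psi>)"
  unfolding bf_def case_prod_beta'
  by (intro continuous_intros) (auto simp: sin_ne0 base_ne)

lemma cont_bf1: "0 < y \<Longrightarrow> continuous_on {y..pi/2} (bf k e X)" if "X \<ge> 0"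
  unfolding bf_def using that
  by (intro continuous_intros) (auto simp: sin_ne0 base_ne)

lemma dX_bf: "0 < y \<Longrightarrow> \<psi> \<in> {y..pi/2} \<Longrightarrow> X > 0 \<Longrightarrow>
  ((\<lambda>X. bf k e X \<psi>) has_real_derivative e * bf (k+p) (e-1) X \<psi>) (at X within {0<..})"
proof -
  assume y: "0 < y" and psi: "\<psi> \<in> {y..pi/2}" and X: "X > 0"
  have s: "sin \<psi> > 0" using psi y by (auto intro: sin_pos_Icc)
  have b: "1 + X * sin \<psi> powr p > 0" using X by (intro base_pos) simp
  have "((\<lambda>X. sin \<psi> powr k * (1 + X * sin \<psi> powr p) powr e) has_real_derivative
      sin \<psi> powr k * (e * (1 + X * sin \<psi> powr p) powr (e - 1) * sin \<psi> powr p)) (at X)"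
    using b by (auto intro!: derivative_eq_intros)
  moreover have "sin \<psi> powr k * (e * (1 + X * sin \<psi> powr p) powr (e - 1) * sin \<psi> powr p)
     = e * bf (k+p) (e-1) X \<psi>"
    using s by (simp add: bf_def powr_add)
  ultimately show ?thesis unfolding bf_def by (auto intro: has_field_derivative_at_within)
qed

lemma sin_pos_open: "\<psi> \<in> {0<..<pi/2} \<Longrightarrow> sin \<psi> > 0"
  by (rule sin_gt_zero) auto

lemma DA:
  assumes X: "X > 0" and y: "0 < y" "y < pi/2"
  shows "((\<lambda>(X,y). integral {y..pi/2} (bf k e X)) has_derivative
     (\<lambda>(tx,ty). (e * integral {y..pi/2} (bf (k+p) (e-1) X)) * tx + (- bf k e X y) * ty)) (at (X,y))"
proof -
  let ?Y = "{0<..<pi/2::real}"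
  have fx: "((\<lambda>X. integral {y..pi/2} (bf k e X)) has_derivative (*) (e * integral {y..pi/2} (bf (k+p) (e-1) X))) (at X within {0<..})"
  proof -
    have "((\<lambda>X. integral (cbox y (pi/2)) (bf k e X)) has_field_derivative integral (cbox y (pi/2)) (\<lambda>\<psi>. e * bf (k+p) (e-1) X \<psi>)) (at X within {0<..})"
    proof (rule leibniz_rule_field_derivative)
      show "((\<lambda>X. bf k e X t) has_field_derivative e * bf (k + p) (e - 1) x t) (at x within {0<..})"
        if "x \<in> {0<..}" "t \<in> cbox y (pi / 2)" for x t
        using that y by (intro dX_bf[of y]) auto
      show "bf k e x integrable_on cbox y (pi / 2)" if "x \<in> {0<..}" for x
        using that y by (auto intro!: integrable_continuous_interval cont_bf1)
      have "continuous_on ({0<..} \<times> {y..pi/2}) (\<lambda>(X,\<psi>). e * bf (k+p) (e-1) X \<psi>)"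
        using continuous_on_mult[OF continuous_on_const cont_bf[OF y(1), of "k+p" "e-1"], of e]
        by (simp add: case_prod_beta')
      then show "continuous_on ({0<..} \<times> cbox y (pi / 2)) (\<lambda>(x, t). e * bf (k + p) (e - 1) x t)"
        by simp
    qed (use X in auto)
    moreover have "integral (cbox y (pi/2)) (\<lambda>\<psi>. e * bf (k+p) (e-1) X \<psi>) = e * integral {y..pi/2} (bf (k+p) (e-1) X)"
      by simp
    ultimately show ?thesis by (simp add: has_field_derivative_def)
  qed
  have fy: "((\<lambda>y. integral {y..pi/2} (bf k e x)) has_derivative blinfun_apply (blinfun_mult_right (- bf k e x y'))) (at y' within ?Y)"
    if "x \<in> {0<..}" "y' \<in> ?Y" for x y'
  proof -
    have "((\<lambda>y. integral {y..pi/2} (bf k e x)) has_real_derivative - bf k e x y') (at y' within {y'/2..pi/2})"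
      using that by (intro integral_has_real_derivative' cont_bf1) auto
    moreover have "at y' within {y'/2..pi/2} = at y'"
      using that by (intro at_within_Icc_at) auto
    ultimately have "((\<lambda>y. integral {y..pi/2} (bf k e x)) has_real_derivative - bf k e x y') (at y')" by simp
    then show ?thesis by (auto simp: has_field_derivative_def intro: has_derivative_at_withinI)
  qed
  have co: "continuous_on ({0<..} \<times> ?Y) (\<lambda>(x, y). blinfun_mult_right (- bf k e x y))"
    unfolding case_prod_beta' bf_def
    by (intro bounded_linear.continuous_on[OF bounded_linear_blinfun_mult_right] continuous_intros)
       (auto simp: base_ne dest: sin_pos_open)
  have "continuous (at (X,y) within {0<..} \<times> ?Y) (\<lambda>(x, y). blinfun_mult_right (- bf k e x y))"
    using co X y by (simp add: continuous_on_eq_continuous_within)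
  from has_derivative_partialsI[OF fx fy this] y
  have "((\<lambda>(X,y). integral {y..pi/2} (bf k e X)) has_derivative
     (\<lambda>(tx,ty). (e * integral {y..pi/2} (bf (k+p) (e-1) X)) * tx + (- bf k e X y) * ty)) (at (X,y) within {0<..} \<times> ?Y)"
    by (simp add: convex_real_interval)
  moreover have "at (X,y) within {0<..} \<times> ?Y = at (X,y)"
    using X y by (intro at_within_open) (auto intro: open_Times)
  ultimately show ?thesis by simp
qed

lemma xf_deriv: "\<phi> \<in> {0<..<pi/2} \<Longrightarrow> (xf has_real_derivative xd \<phi>) (at \<phi>)"
proof -
  assume "\<phi> \<in> {0<..<pi/2}"
  then have s: "sin \<phi> > 0" by (rule sin_pos_open)
  have "(xf has_real_derivative c * (- p * sin \<phi> powr (- p - 1) * cos \<phi>)) (at \<phi>)"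
    unfolding xf_def using s by (auto intro!: derivative_eq_intros)
  moreover have "c * (- p * sin \<phi> powr (- p - 1) * cos \<phi>) = xd \<phi>"
    using s by (simp add: xd_def powr_diff)
  ultimately show ?thesis by simp
qed

lemma xf_pos: "\<phi> \<in> {0<..<pi/2} \<Longrightarrow> xf \<phi> > 0"
  using sin_pos_open[of \<phi>] cpos by (simp add: xf_def)

lemma DIg:
  assumes phi: "\<phi> \<in> {0<..<pi/2}"
  shows "(Ig k e has_real_derivative (e * Ig (k+p) (e-1) \<phi> * xd \<phi> - bf k e (xf \<phi>) \<phi>)) (at \<phi>)"
proof -
  have 1: "((\<lambda>\<phi>. (xf \<phi>, \<phi>)) has_derivative (\<lambda>h. (xd \<phi> * h, h))) (at \<phi>)"
    using xf_deriv[OF phi] by (auto intro!: derivative_eq_intros simp: has_field_derivative_def mult.commute)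
  have 2: "((\<lambda>(X,y). integral {y..pi/2} (bf k e X)) has_derivative
     (\<lambda>(tx,ty). (e * integral {\<phi>..pi/2} (bf (k+p) (e-1) (xf \<phi>))) * tx + (- bf k e (xf \<phi>) \<phi>) * ty)) (at (xf \<phi>,\<phi>))"
    using phi by (intro DA xf_pos) auto
  from has_derivative_compose[OF 1 2]
  have "((\<lambda>\<phi>. integral {\<phi>..pi / 2} (bf k e (xf \<phi>))) has_derivative
      (\<lambda>h. e * integral {\<phi>..pi / 2} (bf (k + p) (e - 1) (xf \<phi>)) * (xd \<phi> * h) + - bf k e (xf \<phi>) \<phi> * h)) (at \<phi>)"
    by simp
  then show ?thesis unfolding has_field_derivative_def Ig_def
    by (rule has_derivative_eq_rhs) (auto simp: algebra_simps fun_eq_iff)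
qed

lemma sm_sinpowr: "sm {0<..<pi/2} (\<lambda>\<phi>. sin \<phi> powr a)"
proof -
  have "sm {0<..} (\<lambda>x::real. x powr a)" by (rule sm_powr) simp
  moreover have "sin ` {0<..<pi/2} \<subseteq> {0<..}" using sin_pos_open by force
  ultimately show ?thesis by (rule sm_compose[OF sm_sincos(1)])
qed

lemma bf_diag: "\<phi> \<in> {0<..<pi/2} \<Longrightarrow> bf k e (xf \<phi>) \<phi> = sin \<phi> powr k * (1 + c) powr e"
proof -
  assume "\<phi> \<in> {0<..<pi/2}"
  then have s: "sin \<phi> > 0" by (rule sin_pos_open)
  have "sin \<phi> powr (-p) * sin \<phi> powr p = 1" using s by (simp add: powr_add[symmetric])
  then show ?thesis by (simp add: bf_def xf_def mult.assoc)
qed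

lemma xd_alt: "\<phi> \<in> {0<..<pi/2} \<Longrightarrow> xd \<phi> = (-p*c) * sin \<phi> powr (-p) * cos \<phi> * sin \<phi> powr (-1)"
proof -
  assume "\<phi> \<in> {0<..<pi/2}"
  then have s: "sin \<phi> > 0" by (rule sin_pos_open)
  have e: "sin \<phi> powr (-1) = inverse (sin \<phi>)" using s powr_minus[of "sin \<phi>" 1] by simp
  show ?thesis unfolding xd_def e by (simp add: divide_inverse)
qed

lemma sm_xd_fun: "sm {0<..<pi/2} (\<lambda>\<phi>. (-p*c) * sin \<phi> powr (-p) * cos \<phi> * sin \<phi> powr (-1))"
  by (rule sm_mult[OF sm_mult[OF sm_mult[OF sm_const sm_sinpowr] sm_sincos(2)] sm_sinpowr])

lemma sm_Ig: "sm {0<..<pi/2} (Ig k e)"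
proof -
  let ?V = "{0<..<pi/2::real}"
  let ?P = "\<lambda>f. \<exists>k e. f = Ig k e"
  have *: "\<exists>f'. (\<forall>x\<in>?V. (f has_real_derivative f' x) (at x)) \<and> alg ?V ?P f'" if "?P f" for f
  proof -
    from that obtain k e where f: "f = Ig k e" by blast
    let ?f' = "\<lambda>\<phi>. (e * Ig (k+p) (e-1) \<phi>) * ((-p*c) * sin \<phi> powr (-p) * cos \<phi> * sin \<phi> powr (-1))
        + (-1) * (sin \<phi> powr k * (1 + c) powr e)"
    have A0: "alg ?V ?P (Ig (k+p) (e-1))" by (rule alg_P) blast
    have A: "alg ?V ?P (\<lambda>\<phi>. e * Ig (k+p) (e-1) \<phi>)" by (rule alg_mult[OF alg_sm[OF sm_const] A0])
    have B: "alg ?V ?P (\<lambda>\<phi>. (e * Ig (k+p) (e-1) \<phi>) * ((-p*c) * sin \<phi> powr (-p) * cos \<phi> * sin \<phi> powr (-1)))"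
      by (rule alg_mult[OF A alg_sm[OF sm_xd_fun]])
    have C: "alg ?V ?P (\<lambda>\<phi>. (-1) * (sin \<phi> powr k * (1 + c) powr e))"
      by (rule alg_sm, rule sm_mult[OF sm_const sm_mult[OF sm_sinpowr sm_const]])
    have "alg ?V ?P ?f'" by (rule alg_add[OF B C])
    moreover have "(f has_real_derivative ?f' x) (at x)" if x: "x \<in> ?V" for x
    proof -
      have "?f' x = e * Ig (k+p) (e-1) x * xd x - bf k e (xf x) x"
        using x by (simp only: bf_diag xd_alt)
      then show ?thesis using DIg[OF x, of k e] f by simp
    qed
    ultimately show ?thesis by (intro exI[of _ ?f']) simp
  qed
  have "alg ?V ?P (Ig k e)" by (rule alg_P) blast
  then show ?thesis
  proof (rule alg_sm_upto[rotated])
    fix f assume "?P f" then show "\<exists>f'. (\<forall>x\<in>?V. (f has_real_derivative f' x) (at x)) \<and> alg ?V ?P f'" by (rule *)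
  qed
qed

end

lemma CV:
  fixes A :: "real \<Rightarrow> real" and \<phi> :: real
  assumes phi: "0 < \<phi>" "\<phi> < pi/2"
  assumes contA: "continuous_on {sin \<phi>..1} A" and Anonneg: "\<And>u. u \<in> {sin \<phi>..1} \<Longrightarrow> A u \<ge> 0"
  shows "integral {sin \<phi>..1} (\<lambda>u. sqrt (A u / (1 - u\<^sup>2))) = integral {\<phi>..pi/2} (\<lambda>\<psi>. sqrt (A (sin \<psi>)))"
proof -
  define s where "s = sin \<phi>"
  define F where "F u = sqrt (A u / (1 - u\<^sup>2))" for u
  define g where "g \<psi> = sqrt (A (sin \<psi>))" for \<psi>
  have s01: "0 < s" "s < 1" unfolding s_def using phi
    using sin_monotone_2pi[of \<phi> "pi/2"] by (auto intro!: sin_gt_zero)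
  have sinmap: "sin \<psi> \<in> {s..1}" if "\<psi> \<in> {\<phi>..pi/2}" for \<psi>
    using that phi unfolding s_def by (auto intro!: sin_monotone_2pi_le)
  have contg: "continuous_on {\<phi>..pi/2} g"
    unfolding g_def
    by (intro continuous_intros continuous_on_compose2[OF contA]) (use sinmap s_def in auto)
  define J where "J = integral {\<phi>..pi/2} g"
  have gJ: "(g has_integral J) {\<phi>..pi/2}"
    unfolding J_def using integrable_continuous_real[OF contg] by (rule integrable_integral)
  have gnn: "g x \<ge> 0" if "x \<in> {\<phi>..pi/2}" for x unfolding g_def
    using Anonneg[of "sin x"] sinmap[OF that] s_def by auto
  have J0: "J \<ge> 0" using has_integral_nonneg[OF gJ gnn] by simp
  have Fnn: "F u * indicator {s..1} u \<ge> 0" for u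
  proof (cases "u \<in> {s..1}")
    case True
    then have "1 - u\<^sup>2 \<ge> 0" using s01 by (auto simp: power2_eq_square intro!: mult_le_one)
    then show ?thesis using True Anonneg[of u] s_def by (auto simp: F_def)
  qed auto
  have meas: "(\<lambda>u. F u * indicator {s..1} u) \<in> borel_measurable borel"
  proof -
    have e: "(\<lambda>u. F u * indicator {s..1} u) = (\<lambda>u. sqrt ((indicator {s..1} u *\<^sub>R A u) / (1 - u\<^sup>2)))"
      by (auto simp: F_def fun_eq_iff indicator_def)
    have "(\<lambda>u. indicator {s..1} u *\<^sub>R A u) \<in> borel_measurable borel"
      using contA s_def by (intro borel_measurable_continuous_on_indicator) auto
    then show ?thesis unfolding e by measurable
  qed
  have sub: "(\<integral>\<^sup>+x. F x * indicator {sin \<phi>..sin (pi/2)} x \<partial>lborel) =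
             (\<integral>\<^sup>+x. F (sin x) * cos x * indicator {\<phi>..pi/2} x \<partial>lborel)"
  proof (rule nn_integral_substitution)
    show "set_borel_measurable borel {sin \<phi>..sin (pi / 2)} F"
      using meas unfolding set_borel_measurable_def s_def by (simp add: mult.commute)
    show "(sin has_real_derivative cos x) (at x)" for x by (rule DERIV_sin)
    show "continuous_on {\<phi>..pi / 2} cos" by (intro continuous_intros)
    show "0 \<le> cos x" if "x \<in> {\<phi>..pi / 2}" for x using that phi by (intro cos_ge_zero) auto
  qed (use phi in auto)
  have "(\<integral>\<^sup>+x. F (sin x) * cos x * indicator {\<phi>..pi/2} x \<partial>lborel) = (\<integral>\<^sup>+x. ennreal (g x) * indicator {\<phi>..pi/2} x \<partial>lborel)"
  proof (rule nn_integral_cong_AE)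
    show "AE x in lborel. ennreal (F (sin x) * cos x * indicator {\<phi>..pi / 2} x) = ennreal (g x) * indicator {\<phi>..pi / 2} x"
      using AE_lborel_singleton[of "pi/2"]
    proof eventually_elim
      case (elim x)
      show ?case
      proof (cases "x \<in> {\<phi>..pi/2}")
        case True
        then have c: "cos x > 0" using elim phi by (intro cos_gt_zero_pi) auto
        have "1 - (sin x)\<^sup>2 = (cos x)\<^sup>2" by (simp add: cos_squared_eq)
        then have "F (sin x) * cos x = g x"
          using c by (simp add: F_def g_def real_sqrt_divide)
        then show ?thesis using True by simp
      qed auto
    qed
  qed
  also have "\<dots> = ennreal J"
    using nn_integral_has_integral_lebesgue'[OF gnn gJ] by simp
  finally have "(\<integral>\<^sup>+x. ennreal (F x * indicator {s..1} x) \<partial>lborel) = ennreal J"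
    using sub s_def by (simp add: indicator_mult_ennreal)
  from nn_integral_has_integral[OF meas Fnn this J0]
  have "((\<lambda>x. F x * indicator {s..1} x) has_integral J) UNIV" .
  then have "(F has_integral J) {s..1}"
  proof (subst has_integral_restrict_UNIV[symmetric])
    assume h: "((\<lambda>x. F x * indicator {s..1} x) has_integral J) UNIV"
    have "(\<lambda>x. F x * indicator {s..1} x) = (\<lambda>x. if x \<in> {s..1} then F x else 0)"
      by (auto simp: fun_eq_iff indicator_def)
    with h show "((\<lambda>x. if x \<in> {s..1} then F x else 0) has_integral J) UNIV" by simp
  qed
  then show ?thesis unfolding s_def F_def J_def g_def by (rule integral_unique)
qed

lemma RF:
  fixes \<beta> z0 y :: real
  assumes b: "\<beta> > 0" and z0: "z0 > 0" and y: "0 < y" "y \<le> z0 powr (-\<beta>)"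
  shows "inverse ((deriv (\<lambda>z. z powr (-\<beta>)) (inv_into {z0..} (\<lambda>z. z powr (-\<beta>)) y))\<^sup>2)
         = \<beta> powr (-2) * y powr (- (2 * (1 + \<beta>) / \<beta>))"
proof -
  define r where "r = (\<lambda>z::real. z powr (-\<beta>))"
  define z1 where "z1 = y powr (-1/\<beta>)"
  have z1pos: "z1 > 0" using y by (simp add: z1_def)
  have rz1: "r z1 = y" using y b by (simp add: r_def z1_def powr_powr)
  have "z1 \<ge> (z0 powr (-\<beta>)) powr (-1/\<beta>)"
    unfolding z1_def using y b by (intro powr_mono2') auto
  then have z1ge: "z1 \<ge> z0" using z0 b by (simp add: powr_powr)
  have inj: "inj_on r {z0..}"
  proof (rule inj_onI)
    fix a b' assume a: "a \<in> {z0..}" and b': "b' \<in> {z0..}" and e: "r a = r b'"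
    have "(r a) powr (-1/\<beta>) = a" "(r b') powr (-1/\<beta>) = b'"
      using a b' z0 b by (auto simp: r_def powr_powr)
    with e show "a = b'" by simp
  qed
  have inv: "inv_into {z0..} r y = z1"
    using inj z1ge rz1 by (intro inv_into_f_eq) auto
  have "(r has_real_derivative (-\<beta>) * z1 powr (-\<beta> - 1)) (at z1)"
    unfolding r_def using z1pos by (auto intro!: derivative_eq_intros)
  then have d: "deriv r z1 = (-\<beta>) * z1 powr (-\<beta> - 1)" by (rule DERIV_imp_deriv)
  have "inverse ((deriv r z1)\<^sup>2) = inverse (\<beta>\<^sup>2) * inverse ((z1 powr (-\<beta> - 1))\<^sup>2)"
    unfolding d by (simp add: power_mult_distrib)
  also have "inverse (\<beta>\<^sup>2) = \<beta> powr (-2)" using b by (simp add: powr_minus powr_realpow)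
  also have "inverse ((z1 powr (-\<beta> - 1))\<^sup>2) = z1 powr (2*\<beta> + 2)"
    using z1pos by (simp add: powr_minus[symmetric] powr_realpow[symmetric] powr_powr algebra_simps)
  also have "z1 powr (2*\<beta> + 2) = y powr (- (2 * (1 + \<beta>) / \<beta>))"
    unfolding z1_def using y b by (simp add: powr_powr field_simps)
  finally show ?thesis unfolding r_def[symmetric] inv .
qed

lemma powr_mhalf: "(b::real) > 0 \<Longrightarrow> b powr (-1/2) = 1 / sqrt b"
proof -
  assume b: "b > 0"
  have e: "(-1/2::real) = -(1/2)" by simp
  have "b powr (-(1/2)) = inverse (b powr (1/2))" by (rule powr_minus)
  also have "b powr (1/2) = sqrt b" using b by (intro powr_half_sqrt) simp
  also have "inverse (sqrt b) = 1 / sqrt b" by (rule inverse_eq_divide)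
  finally show ?thesis by (subst e)
qed

lemma powr_m3half: "(b::real) > 0 \<Longrightarrow> b powr (-1/2-1) = 1 / (b * sqrt b)"
proof -
  assume b: "b > 0"
  have "b powr (-1/2-1) = b powr (-1/2) / b powr 1" by (rule powr_diff)
  also have "\<dots> = (1 / sqrt b) / b" using b by (simp only: powr_mhalf powr_one_gt_zero_iff powr_one)
  also have "\<dots> = 1 / (b * sqrt b)" by (simp add: field_simps)
  finally show ?thesis .
qed

context trump begin

definition "M \<phi> = Ig p (-1/2) \<phi>"
definition "N \<phi> = Ig (p+p) (-1/2-1) \<phi>"

lemma bf_forms:
  assumes "sin \<psi> > 0" "X \<ge> 0"
  shows "bf p (-1/2) X \<psi> = sin \<psi> powr p / sqrt (1 + X * sin \<psi> powr p)"
    "bf (p+p) (-1/2-1) X \<psi> = (sin \<psi> powr p * sin \<psi> powr p) / ((1 + X * sin \<psi> powr p) * sqrt (1 + X * sin \<psi> powr p))"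
proof -
  have b: "1 + X * sin \<psi> powr p > 0" using assms by (intro base_pos) 
  show "bf p (-1/2) X \<psi> = sin \<psi> powr p / sqrt (1 + X * sin \<psi> powr p)"
    unfolding bf_def powr_mhalf[OF b] by simp
  have "sin \<psi> powr (p+p) = sin \<psi> powr p * sin \<psi> powr p" by (rule powr_add)
  then show "bf (p+p) (-1/2-1) X \<psi> = (sin \<psi> powr p * sin \<psi> powr p) / ((1 + X * sin \<psi> powr p) * sqrt (1 + X * sin \<psi> powr p))"
    unfolding bf_def powr_m3half[OF b] by simp
qed

lemma pw_ineqs:
  fixes t X :: real
  assumes t: "0 < t" "t \<le> 1" and X: "X \<ge> 0"
  shows "t / sqrt (1 + X * t) \<ge> 0" "(t * t) / ((1 + X * t) * sqrt (1 + X * t)) \<ge> 0"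
    "X * ((t * t) / ((1 + X * t) * sqrt (1 + X * t))) \<le> t / sqrt (1 + X * t)"
    "X > 0 \<Longrightarrow> t / sqrt (1 + X * t) \<le> 1 / sqrt X"
    "0 < m \<Longrightarrow> m \<le> t \<Longrightarrow> m / sqrt (1 + X) \<le> t / sqrt (1 + X * t)"
proof -
  define B where "B = 1 + X * t"
  have Xt: "X * t \<ge> 0" using t X by simp
  have "X * t \<le> X" using t X by (simp add: mult_left_le)
  then have B: "B > 0" "B \<ge> X * t" "B \<le> 1 + X" unfolding B_def using Xt by linarith+
  have sB: "sqrt B > 0" using B by simp
  show "t / sqrt (1 + X * t) \<ge> 0" "(t * t) / ((1 + X * t) * sqrt (1 + X * t)) \<ge> 0"
    using t B sB unfolding B_def[symmetric] by auto
  have "X * ((t * t) / (B * sqrt B)) = (X * t) * (t / (B * sqrt B))" by simp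
  also have "\<dots> \<le> B * (t / (B * sqrt B))" using B t sB by (intro mult_right_mono) auto
  also have "\<dots> = t / sqrt B" using B by simp
  finally show "X * ((t * t) / ((1 + X * t) * sqrt (1 + X * t))) \<le> t / sqrt (1 + X * t)"
    unfolding B_def .
  show "X > 0 \<Longrightarrow> t / sqrt (1 + X * t) \<le> 1 / sqrt X"
  proof -
    assume X0: "X > 0"
    have "t * t * X \<le> t * X" using t X0 by (intro mult_right_mono) (auto intro: mult_left_le)
    also have "\<dots> \<le> B" using B by (simp add: mult.commute)
    finally have "sqrt (t * t * X) \<le> sqrt B" by simp
    then have "t * sqrt X \<le> sqrt B" using t X0 by (simp add: real_sqrt_mult)
    then show ?thesis unfolding B_def[symmetric] using sB X0 by (simp add: field_simps)
  qed
  show "0 < m \<Longrightarrow> m \<le> t \<Longrightarrow> m / sqrt (1 + X) \<le> t / sqrt (1 + X * t)"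
  proof -
    assume m: "0 < m" "m \<le> t"
    have "sqrt B \<le> sqrt (1 + X)" using B by simp
    then have "m / sqrt (1 + X) \<le> m / sqrt B" using m sB by (intro divide_left_mono) auto
    also have "\<dots> \<le> t / sqrt B" using m sB by (intro divide_right_mono) auto
    finally show ?thesis unfolding B_def .
  qed
qed

lemma t_props:
  assumes "\<phi> \<in> {0<..<pi/2}" "\<psi> \<in> {\<phi>..pi/2}"
  shows "sin \<psi> > 0" "0 < sin \<psi> powr p" "sin \<psi> powr p \<le> 1"
proof -
  show s: "sin \<psi> > 0" using assms by (intro sin_pos_Icc[of \<phi>]) auto
  then show "0 < sin \<psi> powr p" by simp
  have "sin \<psi> powr p \<le> 1 powr p" using s ppos by (intro powr_mono2) auto
  then show "sin \<psi> powr p \<le> 1" by simp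
qed

lemma bf_int: "\<phi> \<in> {0<..<pi/2} \<Longrightarrow> bf k e (xf \<phi>) integrable_on {\<phi>..pi/2}"
  using xf_pos[of \<phi>] by (intro integrable_continuous_real cont_bf1) auto

lemma M_nonneg: assumes "\<phi> \<in> {0<..<pi/2}" shows "M \<phi> \<ge> 0"
  unfolding M_def Ig_def
proof (rule integral_nonneg[OF bf_int[OF assms]])
  fix \<psi> assume "\<psi> \<in> {\<phi>..pi/2}"
  from t_props[OF assms this] xf_pos[OF assms] show "0 \<le> bf p (-1/2) (xf \<phi>) \<psi>"
    by (simp only: bf_forms) (intro pw_ineqs, auto)
qed

lemma N_nonneg: assumes "\<phi> \<in> {0<..<pi/2}" shows "N \<phi> \<ge> 0"
  unfolding N_def Ig_def
proof (rule integral_nonneg[OF bf_int[OF assms]])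
  fix \<psi> assume "\<psi> \<in> {\<phi>..pi/2}"
  from t_props[OF assms this] xf_pos[OF assms] show "0 \<le> bf (p+p) (-1/2-1) (xf \<phi>) \<psi>"
    by (simp only: bf_forms) (intro pw_ineqs, auto)
qed

lemma xN_le_M: assumes "\<phi> \<in> {0<..<pi/2}" shows "xf \<phi> * N \<phi> \<le> M \<phi>"
proof -
  have "xf \<phi> * N \<phi> = integral {\<phi>..pi/2} (\<lambda>\<psi>. xf \<phi> * bf (p+p) (-1/2-1) (xf \<phi>) \<psi>)"
    unfolding N_def Ig_def by simp
  also have "\<dots> \<le> M \<phi>"
    unfolding M_def Ig_def
  proof (rule integral_le)
    show "(\<lambda>\<psi>. xf \<phi> * bf (p+p) (-1/2-1) (xf \<phi>) \<psi>) integrable_on {\<phi>..pi/2}"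
      using integrable_on_cmult_left[OF bf_int[OF assms, of "p+p" "-1/2-1"], of "xf \<phi>"] by simp
    show "bf p (-1/2) (xf \<phi>) integrable_on {\<phi>..pi/2}" by (rule bf_int[OF assms])
    fix \<psi> assume "\<psi> \<in> {\<phi>..pi/2}"
    from t_props[OF assms this] xf_pos[OF assms] 
    show "xf \<phi> * bf (p+p) (-1/2-1) (xf \<phi>) \<psi> \<le> bf p (-1/2) (xf \<phi>) \<psi>"
      by (simp only: bf_forms) (intro pw_ineqs, auto)
  qed
  finally show ?thesis .
qed

lemma M_upper: assumes "\<phi> \<in> {0<..<pi/2}" shows "M \<phi> \<le> (pi/2) / sqrt (xf \<phi>)"
proof -
  have "M \<phi> \<le> integral {\<phi>..pi/2} (\<lambda>\<psi>. 1 / sqrt (xf \<phi>))"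
    unfolding M_def Ig_def
  proof (rule integral_le)
    show "bf p (-1/2) (xf \<phi>) integrable_on {\<phi>..pi/2}" by (rule bf_int[OF assms])
    fix \<psi> assume "\<psi> \<in> {\<phi>..pi/2}"
    from t_props[OF assms this] xf_pos[OF assms] 
    show "bf p (-1/2) (xf \<phi>) \<psi> \<le> 1 / sqrt (xf \<phi>)"
      by (simp only: bf_forms) (intro pw_ineqs, auto)
  qed auto
  also have "\<dots> = (pi/2 - \<phi>) * (1 / sqrt (xf \<phi>))" using assms by simp
  also have "\<dots> \<le> (pi/2) * (1 / sqrt (xf \<phi>))" using assms xf_pos[OF assms]
    by (intro mult_right_mono) auto
  finally show ?thesis by simp
qed

lemma M_lower: assumes "\<phi> \<in> {0<..<pi/2}" "\<phi> \<le> pi/4"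
  shows "M \<phi> \<ge> (pi/4) * (sin (pi/4) powr p / sqrt (1 + xf \<phi>))"
proof -
  let ?m = "sin (pi/4) powr p"
  have ph: "\<phi> \<in> {0<..<pi/2}" by (rule assms(1))
  have m0: "?m > 0" by (simp add: sin_45)
  have "(pi/4) * (?m / sqrt (1 + xf \<phi>)) = integral {pi/4..pi/2} (\<lambda>\<psi>. ?m / sqrt (1 + xf \<phi>))"
    by simp
  also have "\<dots> \<le> integral {pi/4..pi/2} (bf p (-1/2) (xf \<phi>))"
  proof (rule integral_le)
    show "bf p (-1/2) (xf \<phi>) integrable_on {pi/4..pi/2}"
      by (rule integrable_on_subinterval[OF bf_int[OF ph]]) (use assms in auto)
    fix \<psi> assume psi: "\<psi> \<in> {pi/4..pi/2}"
    then have psi': "\<psi> \<in> {\<phi>..pi/2}" using assms by auto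
    have "sin (pi/4) \<le> sin \<psi>" using psi by (intro sin_monotone_2pi_le) auto
    then have mt: "?m \<le> sin \<psi> powr p" using ppos by (intro powr_mono2) (auto simp: sin_45)
    from t_props[OF ph psi'] xf_pos[OF ph] mt m0
    show "?m / sqrt (1 + xf \<phi>) \<le> bf p (-1/2) (xf \<phi>) \<psi>"
      by (simp only: bf_forms) (intro pw_ineqs, auto)
  qed auto
  also have "\<dots> \<le> M \<phi>"
    unfolding M_def Ig_def
  proof (rule integral_subset_le)
    show "bf p (-1/2) (xf \<phi>) integrable_on {pi/4..pi/2}"
      by (rule integrable_on_subinterval[OF bf_int[OF ph]]) (use assms in auto)
    show "\<forall>x\<in>{\<phi>..pi / 2}. 0 \<le> bf p (- 1 / 2) (xf \<phi>) x"
    proof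
      fix \<psi> assume "\<psi> \<in> {\<phi>..pi/2}"
      from t_props[OF ph this] xf_pos[OF ph] show "0 \<le> bf p (-1/2) (xf \<phi>) \<psi>"
        by (simp only: bf_forms) (intro pw_ineqs, auto)
    qed
  qed (use assms bf_int[OF ph] in auto)
  finally show ?thesis .
qed

end

lemma arithL4:
  fixes p c a s C M N sp sq :: real
  assumes "p > 0" "c > 0" "a > 0" "s > 0" "C \<ge> 0" "M \<ge> 0" "N \<ge> 0" "c * a * N \<le> M" "sp \<ge> 0" "sq > 0"
  shows "(-p*c*a*C/s) * (-(1/2) * N * (-p*c*a*C/s) - sp / sq) + M * (p*c*a*((p+1)*C^2/s^2+1))
         \<ge> p*c*a*C^2*M/s^2"
proof -
  let ?xd = "-p*c*a*C/s"
  have x0: "?xd \<le> 0" using assms by (simp add: divide_nonneg_pos)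
  have t1: "?xd * (- (sp / sq)) \<ge> 0" using x0 assms by (simp add: mult_nonpos_nonpos)
  have "N * ?xd^2 = (c*a*N) * (p^2*c*a*C^2/s^2)" using assms by (simp add: field_simps power2_eq_square)
  also have "\<dots> \<le> M * (p^2*c*a*C^2/s^2)" using assms by (intro mult_right_mono) auto
  finally have t2: "N * ?xd^2 \<le> M * (p^2*c*a*C^2/s^2)" .
  have t3: "M * (p*c*a*((p+1)*C^2/s^2+1)) \<ge> M * (p*c*a*(p+1)*C^2/s^2)"
    using assms by (intro mult_left_mono) (auto simp: field_simps)
  have "(-p*c*a*C/s) * (-(1/2) * N * (-p*c*a*C/s) - sp / sq) = -(1/2) * (N * ?xd^2) + ?xd * (- (sp / sq))"
    by (simp add: algebra_simps power2_eq_square)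
  then have "(-p*c*a*C/s) * (-(1/2) * N * (-p*c*a*C/s) - sp / sq) + M * (p*c*a*((p+1)*C^2/s^2+1))
     \<ge> -(1/2) * (M * (p^2*c*a*C^2/s^2)) + M * (p*c*a*(p+1)*C^2/s^2)"
    using t1 t2 t3 by linarith
  moreover have "-(1/2) * (M * (p^2*c*a*C^2/s^2)) + M * (p*c*a*(p+1)*C^2/s^2) = (1 + p/2) * (p*c*a*C^2*M/s^2)"
    using assms by (simp add: field_simps power2_eq_square)
  moreover have "(1 + p/2) * (p*c*a*C^2*M/s^2) \<ge> p*c*a*C^2*M/s^2"
  proof -
    have X: "p*c*a*C^2*M/s^2 \<ge> 0" using assms by simp
    define X where "X = p*c*a*C^2*M/s^2"
    have "(p/2) * X \<ge> 0" using assms X unfolding X_def[symmetric] by simp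
    then show ?thesis unfolding X_def[symmetric] by (simp add: algebra_simps)
  qed
  ultimately show ?thesis by linarith
qed

lemma arithL5:
  fixes p c Q s C M N sp R K1 :: real
  assumes "p > 0" "c > 0" "Q \<ge> 1" "s > 0" "s \<le> 1" "C \<ge> 0" "C \<le> 1" "M \<ge> 0" "N \<ge> 0" "M \<le> K1 / Q"
    "Q^2 * sp = 1" "R > 0"
  shows "(-p*c*Q^2*C/s) * (-(1/2) * N * (-p*c*Q^2*C/s) - sp / R) + M * (p*c*Q^2*((p+1)*C^2/s^2+1))
         \<le> (p*c/R + K1*p*c*(p+2)) * Q / s^2"
proof -
  have Q0: "Q > 0" using assms by simp
  have "K1 / Q \<ge> 0" using assms by linarith
  then have K1: "K1 \<ge> 0" using Q0 by (simp add: zero_le_divide_iff)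
  have t1: "-(1/2) * N * (-p*c*Q^2*C/s)^2 \<le> 0" using assms by simp
  have "(-p*c*Q^2*C/s) * (- sp / R) = p*c*C/(s*R) * (Q^2 * sp)" using assms by (simp add: field_simps)
  also have "\<dots> = p*c*C/(s*R)" using assms by simp
  also have "\<dots> \<le> p*c/(s*R)" using assms by (intro divide_right_mono) (auto intro: mult_left_le)
  also have "\<dots> \<le> p*c/(s^2*R) * Q"
  proof -
    have "p*c/(s*R) \<le> p*c/(s^2*R)" using assms
      by (intro divide_left_mono mult_right_mono) (auto simp: power2_eq_square intro: mult_left_le)
    also have "\<dots> \<le> p*c/(s^2*R) * Q"
    proof -
      have x0: "0 \<le> p*c/(s^2*R)" using assms by simp
      show ?thesis using mult_left_mono[OF assms(3) x0] by simp
    qed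
    finally show ?thesis .
  qed
  finally have t2: "(-p*c*Q^2*C/s) * (- sp / R) \<le> p*c/(s^2*R) * Q" .
  have "M * (p*c*Q^2*((p+1)*C^2/s^2+1)) \<le> (K1 / Q) * (p*c*Q^2*((p+1)*C^2/s^2+1))"
    using assms by (intro mult_right_mono) auto
  also have "\<dots> = K1*p*c*Q*((p+1)*C^2/s^2+1)" using Q0 by (simp add: field_simps power2_eq_square)
  also have "\<dots> \<le> K1*p*c*Q*((p+2)/s^2)"
  proof (intro mult_left_mono)
    have "C^2 \<le> 1" using assms by (simp add: power_le_one)
    then have "(p+1)*C^2/s^2 \<le> (p+1)/s^2" using assms by (intro divide_right_mono) (auto intro: mult_left_le)
    moreover have "1 \<le> 1/s^2" using assms by (simp add: power_le_one)
    moreover have "(p+2)/s^2 = (p+1)/s^2 + 1/s^2" by (simp add: add_divide_distrib[symmetric])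
    ultimately show "(p+1)*C^2/s^2+1 \<le> (p+2)/s^2" by linarith
  qed (use assms K1 Q0 in auto)
  finally have t3: "M * (p*c*Q^2*((p+1)*C^2/s^2+1)) \<le> K1*p*c*Q*((p+2)/s^2)" .
  have "(-p*c*Q^2*C/s) * (-(1/2) * N * (-p*c*Q^2*C/s) - sp / R) = -(1/2) * N * (-p*c*Q^2*C/s)^2 + (-p*c*Q^2*C/s) * (- sp / R)"
    by (simp add: algebra_simps power2_eq_square)
  moreover have "p*c/(s^2*R) * Q + K1*p*c*Q*((p+2)/s^2) = (p*c/R + K1*p*c*(p+2)) * Q / s^2"
    using assms by (simp add: field_simps)
  ultimately show ?thesis using t1 t2 t3 by linarith
qed


lemma sm_cong:
  assumes "open V" "sm V f" "\<And>x. x \<in> V \<Longrightarrow> g x = f x"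
  shows "sm V g"
proof -
  from sm_deriv[OF assms(2)] obtain f' where f': "\<forall>x\<in>V. (f has_real_derivative f' x) (at x)" "sm V f'"
    by blast
  show ?thesis
  proof (rule smI[OF _ f'(2)])
    fix x assume x: "x \<in> V"
    show "(g has_real_derivative f' x) (at x)"
      by (rule has_field_derivative_transform_within_open[OF _ assms(1) x]) (use f' x assms(3) in auto)
  qed
qed

context trump begin

definition "kp \<phi> = M \<phi> * xd \<phi> - 2 * sqrt (1 + c)"
definition "xdd \<phi> = p * c * sin \<phi> powr (-p) * ((p+1) * (cos \<phi>)\<^sup>2 / (sin \<phi>)\<^sup>2 + 1)"
definition "kpd \<phi> = xd \<phi> * (-(1/2) * N \<phi> * xd \<phi> - sin \<phi> powr p / sqrt (1 + c)) + M \<phi> * xdd \<phi>"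

lemma sqrt1c: "(1 + c) powr (1/2) = sqrt (1 + c)"
  using cpos by (intro powr_half_sqrt) simp

lemma G_deriv: assumes "\<phi> \<in> {0<..<pi/2}"
  shows "((\<lambda>\<phi>. 2 * Ig 0 (1/2) \<phi>) has_real_derivative kp \<phi>) (at \<phi>)"
proof -
  have e1: "Ig (0+p) (1/2-1) \<phi> = M \<phi>" unfolding M_def by simp
  have e2: "bf 0 (1/2) (xf \<phi>) \<phi> = sqrt (1 + c)"
    using bf_diag[OF assms, of 0 "1/2"] sin_pos_open[OF assms] by (simp only: sqrt1c) simp
  have "((\<lambda>\<phi>. 2 * Ig 0 (1/2) \<phi>) has_real_derivative 2 * (1/2 * Ig (0+p) (1/2-1) \<phi> * xd \<phi> - bf 0 (1/2) (xf \<phi>) \<phi>)) (at \<phi>)"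
    by (intro DERIV_cmult DIg assms)
  also have "2 * (1/2 * Ig (0+p) (1/2-1) \<phi> * xd \<phi> - bf 0 (1/2) (xf \<phi>) \<phi>) = kp \<phi>"
    unfolding e1 e2 kp_def by simp
  finally show ?thesis .
qed

lemma M_deriv: assumes "\<phi> \<in> {0<..<pi/2}"
  shows "(M has_real_derivative (-(1/2) * N \<phi> * xd \<phi> - sin \<phi> powr p / sqrt (1 + c))) (at \<phi>)"
proof -
  have e1: "Ig (p+p) (-1/2-1) \<phi> = N \<phi>" unfolding N_def by simp
  have e2: "bf p (-1/2) (xf \<phi>) \<phi> = sin \<phi> powr p / sqrt (1 + c)"
    using bf_diag[OF assms, of p "-1/2"] powr_mhalf[of "1+c"] cpos by simp
  have "(Ig p (-1/2) has_real_derivative (-1/2) * Ig (p+p) (-1/2-1) \<phi> * xd \<phi> - bf p (-1/2) (xf \<phi>) \<phi>) (at \<phi>)"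
    by (intro DIg assms)
  then show ?thesis unfolding e1 e2 M_def[symmetric] by simp
qed

lemma xd_deriv: assumes "\<phi> \<in> {0<..<pi/2}" shows "(xd has_real_derivative xdd \<phi>) (at \<phi>)"
proof -
  have s: "sin \<phi> > 0" by (rule sin_pos_open[OF assms])
  have "((\<lambda>\<phi>. - p * c * sin \<phi> powr (-p) * cos \<phi> / sin \<phi>) has_real_derivative
     - p * c * ((- p * sin \<phi> powr (- p - 1) * cos \<phi>) * cos \<phi> / sin \<phi> + sin \<phi> powr (-p) * ((- sin \<phi> * sin \<phi> - cos \<phi> * cos \<phi>) / (sin \<phi> * sin \<phi>)))) (at \<phi>)"
    using s by (auto intro!: derivative_eq_intros simp: field_simps)
  moreover have "- p * c * ((- p * sin \<phi> powr (- p - 1) * cos \<phi>) * cos \<phi> / sin \<phi> + sin \<phi> powr (-p) * ((- sin \<phi> * sin \<phi> - cos \<phi> * cos \<phi>) / (sin \<phi> * sin \<phi>))) = xdd \<phi>"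
  proof -
    have "sin \<phi> powr (- p - 1) = sin \<phi> powr (-p) / sin \<phi>" using s by (simp add: powr_diff)
    moreover have "sin \<phi> * sin \<phi> + cos \<phi> * cos \<phi> = 1" using sin_cos_squared_add[of \<phi>] by (simp add: power2_eq_square)
    ultimately show ?thesis unfolding xdd_def using s
      by (simp add: field_simps power2_eq_square)
  qed
  ultimately show ?thesis unfolding xd_def[abs_def] by simp
qed

lemma kp_deriv: assumes "\<phi> \<in> {0<..<pi/2}" shows "(kp has_real_derivative kpd \<phi>) (at \<phi>)"
proof -
  have "((\<lambda>\<phi>. M \<phi> * xd \<phi> - 2 * sqrt (1 + c)) has_real_derivative
     (-(1/2) * N \<phi> * xd \<phi> - sin \<phi> powr p / sqrt (1 + c)) * xd \<phi> + M \<phi> * xdd \<phi>) (at \<phi>)"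
    by (auto intro!: derivative_eq_intros M_deriv[OF assms] xd_deriv[OF assms])
  then show ?thesis unfolding kp_def[abs_def] kpd_def by (simp add: algebra_simps)
qed

lemma sm_kp: "sm {0<..<pi/2} kp"
proof (rule sm_cong)
  show "sm {0<..<pi/2} (\<lambda>\<phi>. M \<phi> * ((-p*c) * sin \<phi> powr (-p) * cos \<phi> * sin \<phi> powr (-1)) - 2 * sqrt (1 + c))"
    unfolding M_def by (rule sm_diff[OF sm_mult[OF sm_Ig sm_xd_fun] sm_const])
  show "kp x = M x * ((-p*c) * sin x powr (-p) * cos x * sin x powr (-1)) - 2 * sqrt (1 + c)"
    if "x \<in> {0<..<pi/2}" for x
    unfolding kp_def xd_alt[OF that] ..
qed auto

end

lemma sm_sgn: "sm ({a<..<b} - {0}) sgn"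
proof (rule smI)
  show "sm ({a<..<b} - {0}) (\<lambda>x. 0)" by (rule sm_const)
  fix x :: real assume x: "x \<in> {a<..<b} - {0}"
  show "(sgn has_real_derivative 0) (at x)"
  proof (cases "x > 0")
    case True
    have d: "((\<lambda>x::real. 1) has_real_derivative 0) (at x)" by (rule DERIV_const)
    show ?thesis
      by (rule has_field_derivative_transform_within_open[OF d, of "{0<..}"]) (use True in simp_all)
  next
    case False
    then have n: "x < 0" using x by auto
    have d: "((\<lambda>x::real. -1) has_real_derivative 0) (at x)" by (rule DERIV_const)
    show ?thesis
      by (rule has_field_derivative_transform_within_open[OF d, of "{..<0}"]) (use n in simp_all)
  qed
qed

lemma sm_abs: "sm ({a<..<b} - {0}) abs"
proof (rule smI)
  show "sm ({a<..<b} - {0}) sgn" by (rule sm_sgn)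
  fix x :: real assume x: "x \<in> {a<..<b} - {0}"
  show "(abs has_real_derivative sgn x) (at x)"
  proof (cases "x > 0")
    case True
    have d: "((\<lambda>x. x) has_real_derivative sgn x) (at x)" using True DERIV_ident by simp
    show ?thesis by (rule has_field_derivative_transform_within_open[OF d, of "{0<..}"]) (use True in simp_all)
  next
    case False
    then have n: "x < 0" using x by auto
    have d: "((\<lambda>x. -x) has_real_derivative sgn x) (at x)" using n DERIV_minus[OF DERIV_ident] by simp
    show ?thesis by (rule has_field_derivative_transform_within_open[OF d, of "{..<0}"]) (use n in simp_all)
  qed
qed


context trump begin

definition "K0 = (pi/4) * (sin (pi/4) powr p / sqrt (1 + c))"
definition "K1 = (pi/2) / sqrt c"

lemma K0pos: "K0 > 0" unfolding K0_def using cpos by (simp add: sin_45)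
lemma K1pos: "K1 > 0" unfolding K1_def using cpos by simp

lemma Qf:
  assumes phi: "\<phi> \<in> {0<..<pi/2}"
  defines "Q \<equiv> sqrt (sin \<phi> powr (-p))"
  shows "Q \<ge> 1" "Q^2 = sin \<phi> powr (-p)" "Q^2 * sin \<phi> powr p = 1" "xf \<phi> = c * Q^2"
    "xd \<phi> = -p*c*Q^2*cos \<phi>/sin \<phi>" "xdd \<phi> = p*c*Q^2*((p+1)*(cos \<phi>)^2/(sin \<phi>)^2 + 1)"
    "M \<phi> \<le> K1/Q" "\<phi> \<le> pi/4 \<Longrightarrow> M \<phi> \<ge> K0/Q"
    "0 < sin \<phi>" "sin \<phi> \<le> 1" "cos \<phi> > 0" "cos \<phi> \<le> 1"
proof -
  show s: "0 < sin \<phi>" by (rule sin_pos_open[OF phi])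
  show "sin \<phi> \<le> 1" by simp
  show "cos \<phi> > 0" using phi by (intro cos_gt_zero_pi) auto
  show "cos \<phi> \<le> 1" by simp
  have a0: "sin \<phi> powr (-p) > 0" using s by simp
  show Q2: "Q^2 = sin \<phi> powr (-p)" unfolding Q_def using a0 by simp
  have "sin \<phi> powr p \<le> 1 powr p" using s ppos by (intro powr_mono2) auto
  then have sp: "sin \<phi> powr p \<le> 1" by simp
  have inv: "sin \<phi> powr (-p) = inverse (sin \<phi> powr p)" by (rule powr_minus)
  have "1 \<le> sin \<phi> powr (-p)" unfolding inv using sp s by (simp add: one_le_inverse_iff)
  then show Q1: "Q \<ge> 1" unfolding Q_def by simp
  show "Q^2 * sin \<phi> powr p = 1" unfolding Q2 inv using s by simp
  show xf: "xf \<phi> = c * Q^2" unfolding Q2 xf_def ..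
  show "xd \<phi> = -p*c*Q^2*cos \<phi>/sin \<phi>" unfolding Q2 xd_def ..
  show "xdd \<phi> = p*c*Q^2*((p+1)*(cos \<phi>)^2/(sin \<phi>)^2 + 1)" unfolding Q2 xdd_def ..
  have Q0: "Q > 0" using Q1 by simp
  have "M \<phi> \<le> (pi/2) / sqrt (xf \<phi>)" by (rule M_upper[OF phi])
  also have "sqrt (xf \<phi>) = sqrt c * Q" unfolding xf using cpos Q0 by (simp add: real_sqrt_mult)
  finally show "M \<phi> \<le> K1/Q" unfolding K1_def by simp
  show "\<phi> \<le> pi/4 \<Longrightarrow> M \<phi> \<ge> K0/Q"
  proof -
    assume le: "\<phi> \<le> pi/4"
    let ?m = "sin (pi/4) powr p"
    have m0: "?m > 0" by (simp add: sin_45)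
    have "1 + xf \<phi> \<le> (1 + c) * Q^2" unfolding xf using Q1 cpos
      by (simp add: algebra_simps)
    then have "sqrt (1 + xf \<phi>) \<le> sqrt (1 + c) * Q" using Q0 by (metis real_sqrt_le_iff real_sqrt_mult real_sqrt_pow2_iff real_sqrt_power less_imp_le power2_eq_square real_sqrt_abs abs_of_pos)
    then have "?m / (sqrt (1 + c) * Q) \<le> ?m / sqrt (1 + xf \<phi>)"
      using m0 xf_pos[OF phi] Q0 cpos by (intro divide_left_mono) auto
    then have "(pi/4) * (?m / (sqrt (1 + c) * Q)) \<le> (pi/4) * (?m / sqrt (1 + xf \<phi>))"
      by (rule mult_left_mono) simp
    also have "\<dots> \<le> M \<phi>" by (rule M_lower[OF phi le])
    finally show ?thesis unfolding K0_def by simp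
  qed
qed

end

context trump begin

definition "E \<phi> = - (M \<phi> * xd \<phi>)"
definition "K2 = p * c * K0 / 2"
definition "K3 = p*c/sqrt(1+c) + K1*p*c*(p+2)"

lemma K2pos: "K2 > 0" unfolding K2_def using K0pos cpos ppos by simp
lemma K3pos: "K3 > 0" unfolding K3_def using K1pos cpos ppos by (simp add: add_pos_pos)

lemma cos_half: "0 \<le> \<phi> \<Longrightarrow> \<phi> \<le> pi/4 \<Longrightarrow> cos \<phi> \<ge> 1/2"
proof -
  assume a: "0 \<le> \<phi>" "\<phi> \<le> pi/4"
  have "cos (pi/4) \<le> cos \<phi>" using a by (intro cos_monotone_0_pi_le) auto
  moreover have "cos (pi/4) \<ge> 1/2" unfolding cos_45
  proof -
    have "1 \<le> sqrt (2::real)" by simp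
    then show "1/2 \<le> sqrt 2 / 2" by simp
  qed
  ultimately show ?thesis by linarith
qed

lemma kp_E: "kp \<phi> = - E \<phi> - 2 * sqrt (1 + c)" unfolding kp_def E_def by simp

lemma E_form: assumes phi: "\<phi> \<in> {0<..<pi/2}"
  shows "E \<phi> = p*c*(sqrt (sin \<phi> powr (-p)))^2*cos \<phi>*M \<phi>/sin \<phi>"
  unfolding E_def Qf(5)[OF phi] by simp

lemma E_nonneg: assumes phi: "\<phi> \<in> {0<..<pi/2}" shows "E \<phi> \<ge> 0"
  unfolding E_form[OF phi] using Qf[OF phi] M_nonneg[OF phi] cpos ppos by simp

lemma E_lower: assumes phi: "\<phi> \<in> {0<..<pi/2}" and le: "\<phi> \<le> pi/4"
  shows "E \<phi> \<ge> K2 * sqrt (sin \<phi> powr (-p)) / sin \<phi>"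
proof -
  define Q where "Q = sqrt (sin \<phi> powr (-p))"
  note q = Qf[OF phi, folded Q_def]
  have Q0: "Q > 0" using q by simp
  have C: "cos \<phi> \<ge> 1/2" using phi le by (intro cos_half) auto
  have "K2 * Q / sin \<phi> = (p*c*Q^2*(1/2)*(K0/Q)) / sin \<phi>" unfolding K2_def using Q0 by (simp add: power2_eq_square)
  also have "\<dots> \<le> (p*c*Q^2*cos \<phi>*M \<phi>) / sin \<phi>"
    using q C K0pos cpos ppos le by (intro divide_right_mono mult_mono mult_left_mono) auto
  also have "\<dots> = E \<phi>" unfolding E_form[OF phi] Q_def ..
  finally show ?thesis unfolding Q_def .
qed

lemma E_upper: assumes phi: "\<phi> \<in> {0<..<pi/2}"
  shows "E \<phi> \<le> p*c*K1 * sqrt (sin \<phi> powr (-p)) * cos \<phi> / sin \<phi>"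
proof -
  define Q where "Q = sqrt (sin \<phi> powr (-p))"
  note q = Qf[OF phi, folded Q_def]
  have Q0: "Q > 0" using q by simp
  have "E \<phi> = (p*c*Q^2*cos \<phi>*M \<phi>) / sin \<phi>" unfolding E_form[OF phi] Q_def ..
  also have "\<dots> \<le> (p*c*Q^2*cos \<phi>*(K1/Q)) / sin \<phi>"
    using q cpos ppos by (intro divide_right_mono mult_left_mono) auto
  also have "\<dots> = p*c*K1 * Q * cos \<phi> / sin \<phi>" using Q0 by (simp add: power2_eq_square)
  finally show ?thesis unfolding Q_def .
qed

lemma kpd_lower: assumes phi: "\<phi> \<in> {0<..<pi/2}"
  shows "kpd \<phi> \<ge> p*c*(sqrt (sin \<phi> powr (-p)))^2*(cos \<phi>)^2*M \<phi>/(sin \<phi>)^2"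
proof -
  define Q where "Q = sqrt (sin \<phi> powr (-p))"
  note q = Qf[OF phi, folded Q_def]
  have "kpd \<phi> = (-p*c*Q^2*cos \<phi>/sin \<phi>) * (-(1/2) * N \<phi> * (-p*c*Q^2*cos \<phi>/sin \<phi>) - sin \<phi> powr p / sqrt (1+c))
      + M \<phi> * (p*c*Q^2*((p+1)*(cos \<phi>)^2/(sin \<phi>)^2 + 1))"
    unfolding kpd_def q(5,6) ..
  also have "\<dots> \<ge> p*c*Q^2*(cos \<phi>)^2*M \<phi>/(sin \<phi>)^2"
    by (rule arithL4) (use q ppos cpos M_nonneg[OF phi] N_nonneg[OF phi] xN_le_M[OF phi] in auto)
  finally show ?thesis unfolding Q_def .
qed

lemma kpd_upper: assumes phi: "\<phi> \<in> {0<..<pi/2}"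
  shows "kpd \<phi> \<le> K3 * sqrt (sin \<phi> powr (-p)) / (sin \<phi>)^2"
proof -
  define Q where "Q = sqrt (sin \<phi> powr (-p))"
  note q = Qf[OF phi, folded Q_def]
  have "kpd \<phi> = (-p*c*Q^2*cos \<phi>/sin \<phi>) * (-(1/2) * N \<phi> * (-p*c*Q^2*cos \<phi>/sin \<phi>) - sin \<phi> powr p / sqrt (1+c))
      + M \<phi> * (p*c*Q^2*((p+1)*(cos \<phi>)^2/(sin \<phi>)^2 + 1))"
    unfolding kpd_def q(5,6) ..
  also have "\<dots> \<le> (p*c/sqrt (1+c) + K1*p*c*(p+2)) * Q / (sin \<phi>)^2"
    by (rule arithL5) (use q ppos cpos M_nonneg[OF phi] N_nonneg[OF phi] in auto)
  finally show ?thesis unfolding Q_def K3_def .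
qed


definition "K5 = 2 * sqrt (1 + c) - 2"
lemma K5pos: "K5 > 0" unfolding K5_def using cpos by simp

lemma kp_le: "\<phi> \<in> {0<..<pi/2} \<Longrightarrow> kp \<phi> \<le> -2 * sqrt (1 + c)"
  using E_nonneg[of \<phi>] by (simp add: kp_E)

lemma kp_close: "\<phi> \<in> {0<..<pi/2} \<Longrightarrow> \<bar>kp \<phi> - (-2 * sqrt (1 + c))\<bar> \<le> p*c*K1 * sqrt (sin \<phi> powr (-p)) * cos \<phi> / sin \<phi>"
  using E_nonneg[of \<phi>] E_upper[of \<phi>] by (simp add: kp_E)

lemma kp_bound0: assumes phi: "\<phi> \<in> {0<..<pi/2}" and le: "\<phi> \<le> pi/4" shows "kp \<phi> \<le> - K2 / \<phi>"
proof -
  define Q where "Q = sqrt (sin \<phi> powr (-p))"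
  note q = Qf[OF phi, folded Q_def]
  have s: "sin \<phi> \<le> \<phi>" using phi by (intro sin_x_le_x) auto
  have sp: "sin \<phi> > 0" by (rule q(9))
  have "K2 / \<phi> \<le> K2 / sin \<phi>"
    by (rule divide_left_mono[OF s]) (use K2pos sp phi in auto)
  also have "\<dots> \<le> K2 * Q / sin \<phi>"
  proof (rule divide_right_mono)
    show "K2 \<le> K2 * Q" using K2pos q(1) by simp
  qed (use sp in simp)
  also have "\<dots> \<le> E \<phi>" unfolding Q_def by (rule E_lower[OF phi le])
  finally have "K2 / \<phi> \<le> E \<phi>" .
  moreover have "sqrt (1 + c) \<ge> 0" using cpos by simp
  ultimately show ?thesis using kp_E[of \<phi>] by linarith
qed

lemma bigO_arith:
  fixes K2 K3 Q s X Y :: real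
  assumes "K2 > 0" "K3 > 0" "Q \<ge> 1" "0 < s" "s \<le> 1" "X \<ge> K2 * Q / s" "Y \<le> K3 * Q / s^2"
  shows "Y \<le> (K3 / K2^3) * X^3"
proof -
  have a: "K2 * Q / s > 0" using assms by simp
  have "(K2 * Q / s)^3 \<le> X^3" using assms a by (intro power_mono) auto
  moreover have "K2^3 * Q / s^2 \<le> (K2 * Q / s)^3"
  proof -
    have QQ: "1 \<le> Q * Q" using assms mult_mono[of 1 Q 1 Q] by simp
    have "1 \<le> (Q * Q) / s" using QQ assms by (simp add: le_divide_eq) 
    then have "(K2^3 * Q / s^2) * 1 \<le> (K2^3 * Q / s^2) * ((Q * Q) / s)" using assms by (intro mult_left_mono) auto
    also have "\<dots> = (K2 * Q / s)^3" by (simp add: power_divide power_mult_distrib power3_eq_cube power2_eq_square)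
    finally show ?thesis by simp
  qed
  ultimately have "K2^3 * Q / s^2 \<le> X^3" by linarith
  then have "(K3 / K2^3) * (K2^3 * Q / s^2) \<le> (K3 / K2^3) * X^3" using assms by (intro mult_left_mono) auto
  moreover have "(K3 / K2^3) * (K2^3 * Q / s^2) = K3 * Q / s^2" using assms by simp
  ultimately show ?thesis using assms by linarith
qed

lemma kpd_bigO: assumes phi: "\<phi> \<in> {0<..<pi/2}" and le: "\<phi> \<le> pi/4"
  shows "\<bar>kpd \<phi>\<bar> \<le> (K3 / K2^3) * \<bar>2 + kp \<phi>\<bar>^3"
proof -
  define Q where "Q = sqrt (sin \<phi> powr (-p))"
  note q = Qf[OF phi, folded Q_def]
  have kpd0: "kpd \<phi> \<ge> 0"
    by (rule order_trans[OF _ kpd_lower[OF phi]]) (use q cpos ppos M_nonneg[OF phi] in simp)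
  have "\<bar>2 + kp \<phi>\<bar> \<ge> E \<phi>"
  proof -
    have "sqrt (1 + c) > 1" using cpos by simp
    then have "2 + kp \<phi> \<le> - E \<phi>" using kp_E[of \<phi>] by linarith
    then show ?thesis using E_nonneg[OF phi] by linarith
  qed
  then have X: "\<bar>2 + kp \<phi>\<bar> \<ge> K2 * Q / sin \<phi>" using E_lower[OF phi le] unfolding Q_def by simp
  show ?thesis using bigO_arith[OF K2pos K3pos q(1) q(9) q(10) X] kpd_upper[OF phi] kpd0
    unfolding Q_def by simp
qed

lemma D_pos: assumes phi: "\<phi> \<in> {0<..<pi/2}" and le: "\<phi> \<le> pi/6" and sK: "sin \<phi> < K2 / K5"
  shows "kpd \<phi> * cos \<phi> + (2 + kp \<phi>) * sin \<phi> > 0"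
proof -
  define Q where "Q = sqrt (sin \<phi> powr (-p))"
  note q = Qf[OF phi, folded Q_def]
  define s where "s = sin \<phi>"
  define C where "C = cos \<phi>"
  have s0: "s > 0" "s \<le> 1/2"
    using q(9) sin_monotone_2pi_le[of \<phi> "pi/6"] le phi by (auto simp: s_def sin_30)
  have C0: "C > 0" using q(11) by (simp add: C_def)
  have CS: "C^2 \<ge> 2 * s^2"
  proof -
    have "C^2 = 1 - s^2" unfolding C_def s_def by (simp add: cos_squared_eq)
    moreover have "s^2 \<le> 1/4" using s0 mult_mono[of s "1/2" s "1/2"] by (simp add: power2_eq_square)
    ultimately show ?thesis by linarith
  qed
  have Ef: "E \<phi> = p*c*Q^2*C*M \<phi>/s" unfolding E_form[OF phi] Q_def C_def s_def ..
  have "kpd \<phi> \<ge> p*c*Q^2*C^2*M \<phi>/s^2" using kpd_lower[OF phi] unfolding Q_def C_def s_def .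
  then have "kpd \<phi> * C \<ge> (p*c*Q^2*C^2*M \<phi>/s^2) * C" using C0 by (intro mult_right_mono) auto
  also have "(p*c*Q^2*C^2*M \<phi>/s^2) * C = E \<phi> * (C^2 / s)" unfolding Ef using s0
    by (simp add: field_simps power2_eq_square)
  finally have t1: "kpd \<phi> * C \<ge> E \<phi> * (C^2 / s)" .
  have "E \<phi> * (C^2 / s) \<ge> E \<phi> * (2 * s)"
  proof (rule mult_left_mono)
    show "2 * s \<le> C^2 / s" using CS s0 by (simp add: field_simps power2_eq_square)
  qed (rule E_nonneg[OF phi])
  with t1 have t2: "kpd \<phi> * C \<ge> 2 * (E \<phi> * s)" by simp
  have t3: "(2 + kp \<phi>) * s = - K5 * s - E \<phi> * s" unfolding kp_E K5_def by (simp add: algebra_simps)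
  have "\<phi> \<le> pi/4" using le pi_gt_zero by linarith
  then have "E \<phi> \<ge> K2 * Q / s" using E_lower[OF phi] unfolding Q_def s_def by simp
  then have "E \<phi> * s \<ge> K2 * Q" using s0 by (simp add: field_simps)
  moreover have "K2 * Q \<ge> K2" using K2pos q(1) by simp
  moreover have "K5 * s < K2" using sK K5pos unfolding s_def by (simp add: field_simps)
  ultimately show ?thesis using t2 t3 unfolding C_def s_def by linarith
qed

end

lemma rot_eq:
  fixes \<beta> z0 \<phi> :: real
  assumes b: "\<beta> > 0" and z0: "z0 > 0" and phi: "0 < \<phi>" "\<phi> < pi/2"
  defines "r \<equiv> (\<lambda>z::real. z powr (-\<beta>))"
  defines "p \<equiv> 2 * (1 + \<beta>) / \<beta>"
  defines "c \<equiv> \<beta> powr (-2) * (r z0) powr (-p)"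
  shows "integral {sin \<phi>..1} (\<lambda>u. sqrt ((1 + inverse ((deriv r (inv_into {z0..} r (r z0 * sin \<phi> / u)))\<^sup>2)) / (1 - u\<^sup>2)))
     = trump.Ig c p 0 (1/2) \<phi>"
proof -
  interpret trump c p
    by unfold_locales (use b z0 in \<open>auto simp: c_def p_def r_def\<close>)
  define s where "s = sin \<phi>"
  have s01: "0 < s" "s < 1" unfolding s_def using phi
    using sin_monotone_2pi[of \<phi> "pi/2"] by (auto intro!: sin_gt_zero)
  have r0: "r z0 > 0" using z0 by (simp add: r_def)
  define A where "A u = 1 + c * (u / s) powr p" for u
  have "integral {s..1} (\<lambda>u. sqrt ((1 + inverse ((deriv r (inv_into {z0..} r (r z0 * s / u)))\<^sup>2)) / (1 - u\<^sup>2)))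
      = integral {s..1} (\<lambda>u. sqrt (A u / (1 - u\<^sup>2)))"
  proof (rule integral_cong)
    fix u assume u: "u \<in> {s..1}"
    then have upos: "u > 0" using s01 by auto
    have y: "0 < r z0 * s / u" "r z0 * s / u \<le> z0 powr (-\<beta>)"
      using u upos s01 r0 by (auto simp: r_def field_simps intro!: mult_left_le)
    have "inverse ((deriv r (inv_into {z0..} r (r z0 * s / u)))\<^sup>2) = \<beta> powr (-2) * (r z0 * s / u) powr (-p)"
      using RF[OF b z0 y] unfolding r_def p_def by simp
    also have "(r z0 * s / u) powr (-p) = r z0 powr (-p) * (u / s) powr p"
    proof -
      have "(r z0 * s / u) powr (-p) = r z0 powr (-p) * (s / u) powr (-p)"
        using r0 s01 upos by (simp add: powr_mult[symmetric] mult.assoc)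
      moreover have "(s / u) powr (-p) = (u / s) powr p"
        using s01 upos by (simp add: powr_minus powr_divide)
      ultimately show ?thesis by simp
    qed
    finally show "sqrt ((1 + inverse ((deriv r (inv_into {z0..} r (r z0 * s / u)))\<^sup>2)) / (1 - u\<^sup>2)) = sqrt (A u / (1 - u\<^sup>2))"
      by (simp add: A_def c_def mult.assoc)
  qed
  also have "\<dots> = integral {\<phi>..pi/2} (\<lambda>\<psi>. sqrt (A (sin \<psi>)))"
    unfolding s_def
  proof (rule CV[OF phi])
    show "continuous_on {sin \<phi>..1} A" unfolding A_def s_def[symmetric] using s01
      by (intro continuous_intros) auto
    show "\<And>u. u \<in> {sin \<phi>..1} \<Longrightarrow> 0 \<le> A u" unfolding A_def s_def[symmetric] using s01 cpos
      by (auto intro!: add_nonneg_nonneg)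
  qed
  also have "\<dots> = Ig 0 (1/2) \<phi>"
    unfolding Ig_def
  proof (rule integral_cong)
    fix \<psi> assume psi: "\<psi> \<in> {\<phi>..pi/2}"
    have sp: "sin \<psi> > 0" using psi phi by (intro sin_pos_Icc[of \<phi>]) auto
    have "(sin \<psi> / s) powr p = s powr (-p) * sin \<psi> powr p"
    proof -
      have e1: "(sin \<psi> / s) powr p = sin \<psi> powr p / s powr p" using sp s01 by (auto intro: powr_divide)
      have e2: "s powr (-p) = inverse (s powr p)" by (rule powr_minus)
      show ?thesis unfolding e1 e2 by (simp add: divide_inverse)
    qed
    moreover have "1 + c * (s powr (-p) * sin \<psi> powr p) \<ge> 0" using cpos by (auto intro!: add_nonneg_nonneg)
    ultimately show "sqrt (A (sin \<psi>)) = bf 0 (1/2) (xf \<phi>) \<psi>"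
      using sp by (simp add: A_def bf_def xf_def s_def powr_half_sqrt mult.assoc)
  qed
  finally show ?thesis unfolding s_def .
qed

theorem mainTheorem9:
  fixes \<beta> z0 :: real
  assumes "\<beta> > 0" and "z0 > 0"
  defines "r \<equiv> (\<lambda>z::real. z powr (-\<beta>))"
  defines "r0 \<equiv> r z0"
  defines "\<Delta>\<theta> \<equiv> rotation_fun r z0"
  defines "\<kappa> \<equiv> deriv \<Delta>\<theta>"
  defines "\<omega> \<equiv> (\<lambda>\<phi>. (2 + \<kappa> \<phi>) / cos \<phi>)"
  defines "L \<equiv> -2 * sqrt (1 + \<beta> powr (-2) * r0 powr (-2 * (1 + \<beta>) / \<beta>))"
  shows
    "(\<forall>\<phi>\<in>{-pi/2<..<pi/2} - {0}. \<Delta>\<theta> differentiable (at \<phi>))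
     \<and> smooth_on ({-pi/2<..<pi/2} - {0}) \<kappa>
     \<and> (\<forall>\<phi>\<in>{-pi/2<..<pi/2} - {0}. \<kappa> \<phi> \<le> L)
     \<and> L < -2
     \<and> (\<forall>\<phi>\<in>{-pi/2<..<pi/2} - {0}. \<kappa> \<phi> \<notin> {-2..0} \<and> \<omega> \<phi> < 0)
     \<and> filterlim \<kappa> at_bot (at 0)
     \<and> (\<kappa> \<longlongrightarrow> L) (at_left (pi/2))
     \<and> (\<kappa> \<longlongrightarrow> L) (at_right (-pi/2))
     \<and> (\<lambda>\<phi>. \<bar>deriv \<kappa> \<phi>\<bar>) \<in> O[at 0](\<lambda>\<phi>. \<bar>2 + \<kappa> \<phi>\<bar> ^ 3)
     \<and> (\<exists>\<epsilon>>0. (mono_on {-\<epsilon>..<0} \<omega> \<or> antimono_on {-\<epsilon>..<0} \<omega>)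
               \<and> (mono_on {0<..\<epsilon>} \<omega> \<or> antimono_on {0<..\<epsilon>} \<omega>))"
proof -
  note b = assms(1) and z0 = assms(2)
  define p where "p = 2 * (1 + \<beta>) / \<beta>"
  define c where "c = \<beta> powr (-2) * r0 powr (-p)"
  have r0pos: "r0 > 0" unfolding r0_def r_def using z0 by simp
  have cpos: "c > 0" unfolding c_def using b r0pos by simp
  have ppos: "p > 0" unfolding p_def using b by simp
  interpret trump c p by unfold_locales (rule cpos, rule ppos)
  have Lc: "L = -2 * sqrt (1 + c)"
  proof -
    have "-2 * (1 + \<beta>) / \<beta> = - p" unfolding p_def using b by (simp add: field_simps)
    then show ?thesis unfolding L_def c_def by simp
  qed
  define G2 where "G2 \<phi> = 2 * Ig 0 (1/2) \<phi>" for \<phi>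
  let ?V = "{0<..<pi/2::real}"
  let ?W = "{-pi/2<..<0::real}"
  let ?S = "{-pi/2<..<pi/2::real} - {0}"
  have rot: "\<Delta>\<theta> \<phi> = 2 * sgn \<phi> * integral {\<bar>sin \<phi>\<bar>..1}
       (\<lambda>u. sqrt ((1 + inverse ((deriv r (inv_into {z0..} r (r z0 * \<bar>sin \<phi>\<bar> / u)))\<^sup>2)) / (1 - u\<^sup>2)))" for \<phi>
    unfolding \<Delta>\<theta>_def rotation_fun_def ..
  have Dpos: "\<Delta>\<theta> \<phi> = G2 \<phi>" if "\<phi> \<in> ?V" for \<phi>
  proof -
    have s: "sin \<phi> > 0" using that by (rule sin_pos_open)
    have "\<Delta>\<theta> \<phi> = 2 * integral {sin \<phi>..1}
       (\<lambda>u. sqrt ((1 + inverse ((deriv r (inv_into {z0..} r (r z0 * sin \<phi> / u)))\<^sup>2)) / (1 - u\<^sup>2)))"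
      unfolding rot using s that by simp
    also have "\<dots> = G2 \<phi>"
      using rot_eq[OF b z0, of \<phi>] that unfolding G2_def c_def r0_def r_def p_def by simp
    finally show ?thesis .
  qed
  have Dneg: "\<Delta>\<theta> \<phi> = - G2 (-\<phi>)" if "\<phi> \<in> ?W" for \<phi>
  proof -
    have m: "-\<phi> \<in> ?V" using that by auto
    have s: "sin (-\<phi>) > 0" using m by (rule sin_pos_open)
    have "\<Delta>\<theta> \<phi> = - (2 * integral {sin (-\<phi>)..1}
       (\<lambda>u. sqrt ((1 + inverse ((deriv r (inv_into {z0..} r (r z0 * sin (-\<phi>) / u)))\<^sup>2)) / (1 - u\<^sup>2))))"
      unfolding rot using s that by simp
    also have "\<dots> = - G2 (-\<phi>)"
      using rot_eq[OF b z0, of "-\<phi>"] m unfolding G2_def c_def r0_def r_def p_def by simp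
    finally show ?thesis .
  qed
  have openV: "open ?V" and openW: "open ?W" and openS: "open ?S" by auto
  have dpos: "(\<Delta>\<theta> has_real_derivative kp \<phi>) (at \<phi>)" if "\<phi> \<in> ?V" for \<phi>
  proof (rule has_field_derivative_transform_within_open[OF _ openV that])
    show "(G2 has_real_derivative kp \<phi>) (at \<phi>)" unfolding G2_def by (rule G_deriv[OF that])
  qed (use Dpos in auto)
  have dneg: "(\<Delta>\<theta> has_real_derivative kp (-\<phi>)) (at \<phi>)" if "\<phi> \<in> ?W" for \<phi>
  proof (rule has_field_derivative_transform_within_open[OF _ openW that])
    have m: "-\<phi> \<in> ?V" using that by auto
    have "(G2 has_real_derivative kp (- \<phi>)) (at (-\<phi>))" unfolding G2_def by (rule G_deriv[OF m])
    then have "((\<lambda>x. G2 (- x)) has_real_derivative - kp (- \<phi>)) (at \<phi>)" by (simp add: DERIV_mirror)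
    then show "((\<lambda>x. - G2 (- x)) has_real_derivative kp (- \<phi>)) (at \<phi>)"
      using DERIV_minus by fastforce
  qed (use Dneg in auto)
  have SVW: "\<phi> \<in> ?S \<longleftrightarrow> \<phi> \<in> ?V \<or> \<phi> \<in> ?W" for \<phi> by auto
  have kap: "\<kappa> \<phi> = kp \<bar>\<phi>\<bar>" if "\<phi> \<in> ?S" for \<phi>
  proof (cases "\<phi> \<in> ?V")
    case True
    then show ?thesis unfolding \<kappa>_def using DERIV_imp_deriv[OF dpos[OF True]] by simp
  next
    case False
    then have W: "\<phi> \<in> ?W" using that SVW by blast
    then show ?thesis unfolding \<kappa>_def using DERIV_imp_deriv[OF dneg[OF W]] by simp
  qed
  have kdpos: "(\<kappa> has_real_derivative kpd \<phi>) (at \<phi>)" if "\<phi> \<in> ?V" for \<phi>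
  proof (rule has_field_derivative_transform_within_open[OF _ openV that])
    show "(kp has_real_derivative kpd \<phi>) (at \<phi>)" by (rule kp_deriv[OF that])
  qed (use kap in auto)
  have kdneg: "(\<kappa> has_real_derivative - kpd (-\<phi>)) (at \<phi>)" if "\<phi> \<in> ?W" for \<phi>
  proof (rule has_field_derivative_transform_within_open[OF _ openW that])
    have m: "-\<phi> \<in> ?V" using that by auto
    have "(kp has_real_derivative kpd (- \<phi>)) (at (-\<phi>))" by (rule kp_deriv[OF m])
    then show "((\<lambda>x. kp (- x)) has_real_derivative - kpd (- \<phi>)) (at \<phi>)" by (simp add: DERIV_mirror)
  next
    fix x assume "x \<in> ?W" then show "kp (- x) = \<kappa> x" using kap[of x] by auto
  qed
  have dk: "\<bar>deriv \<kappa> \<phi>\<bar> = \<bar>kpd \<bar>\<phi>\<bar>\<bar>" if "\<phi> \<in> ?S" for \<phi>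
  proof (cases "\<phi> \<in> ?V")
    case True
    then show ?thesis using DERIV_imp_deriv[OF kdpos[OF True]] by simp
  next
    case False
    then have W: "\<phi> \<in> ?W" using that SVW by blast
    then show ?thesis using DERIV_imp_deriv[OF kdneg[OF W]] by simp
  qed
  have absV: "\<bar>\<phi>\<bar> \<in> ?V" if "\<phi> \<in> ?S" for \<phi> using that by auto
  have cospos: "cos \<phi> > 0" if "\<phi> \<in> ?S" for \<phi> using that by (intro cos_gt_zero_pi) auto
  have sqc: "sqrt (1 + c) > 1" using cpos by simp
  have P1: "\<forall>\<phi>\<in>?S. \<Delta>\<theta> differentiable (at \<phi>)"
  proof
    fix \<phi> assume "\<phi> \<in> ?S"
    then consider "\<phi> \<in> ?V" | "\<phi> \<in> ?W" using SVW by blast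
    then show "\<Delta>\<theta> differentiable (at \<phi>)"
      by cases (use dpos dneg has_field_derivative_imp_has_derivative differentiableI in blast)+
  qed
  have P2: "smooth_on ?S \<kappa>"
  proof (rule sm_smooth_on[OF openS _ kap])
    show "sm ?S (\<lambda>x. kp \<bar>x\<bar>)" by (rule sm_compose[OF sm_abs sm_kp]) (use absV in auto)
  qed
  have P3: "\<forall>\<phi>\<in>?S. \<kappa> \<phi> \<le> L" using kap absV kp_le unfolding Lc by auto
  have P4: "L < -2" unfolding Lc using sqc by simp
  have P5: "\<forall>\<phi>\<in>?S. \<kappa> \<phi> \<notin> {-2..0} \<and> \<omega> \<phi> < 0"
  proof
    fix \<phi> assume S: "\<phi> \<in> ?S"
    have "\<kappa> \<phi> \<le> L" using P3 S by blast
    then have "\<kappa> \<phi> < -2" using P4 by linarith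
    then show "\<kappa> \<phi> \<notin> {-2..0} \<and> \<omega> \<phi> < 0" unfolding \<omega>_def using cospos[OF S]
      by (auto simp: divide_neg_pos)
  qed
  have P6: "filterlim \<kappa> at_bot (at 0)"
    unfolding filterlim_at_bot_le[where c=0]
  proof (intro allI impI)
    fix Z :: real assume Z: "Z \<le> 0"
    define d where "d = min (pi/4) (K2 / (1 - Z))"
    have d0: "d > 0" using K2pos Z pi_gt_zero unfolding d_def by auto
    have dK: "K2 / d \<ge> 1 - Z"
    proof -
      have "d \<le> K2 / (1 - Z)" unfolding d_def by simp
      then have "d * (1 - Z) \<le> K2" using Z by (simp add: le_divide_eq)
      then show ?thesis using d0 by (simp add: le_divide_eq mult.commute)
    qed
    show "eventually (\<lambda>x. Z \<ge> \<kappa> x) (at 0)"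
      unfolding eventually_at
    proof (intro exI[of _ d] conjI ballI impI)
      show "d > 0" by (rule d0)
      fix x :: real assume "x \<in> UNIV" and x: "x \<noteq> 0 \<and> dist x 0 < d"
      then have ax: "\<bar>x\<bar> < d" "\<bar>x\<bar> > 0" by auto
      have dpi: "d \<le> pi/4" unfolding d_def by (rule min.cobounded1)
      have S: "x \<in> ?S" using ax dpi pi_gt_zero by auto
      have "\<kappa> x = kp \<bar>x\<bar>" by (rule kap[OF S])
      also have "\<dots> \<le> - K2 / \<bar>x\<bar>" using absV[OF S] ax dpi by (intro kp_bound0) auto
      also have "- K2 / \<bar>x\<bar> \<le> - (K2 / d)"
      proof -
        have "K2 / d \<le> K2 / \<bar>x\<bar>" using ax K2pos by (intro divide_left_mono) auto
        then show ?thesis by simp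
      qed
      finally show "Z \<ge> \<kappa> x" using dK by linarith
    qed
  qed
  define h where "h \<phi> = p*c*K1 * sqrt (sin \<phi> powr (-p)) * cos \<phi> / sin \<phi>" for \<phi>
  have h0: "h (pi/2) = 0" unfolding h_def by simp
  have P7: "(\<kappa> \<longlongrightarrow> L) (at_left (pi/2))"
  proof -
    have "(h \<longlongrightarrow> h (pi/2)) (at_left (pi/2))" unfolding h_def by (intro tendsto_intros) auto
    then have hl: "(h \<longlongrightarrow> 0) (at_left (pi/2))" using h0 by simp
    have "eventually (\<lambda>x. norm (\<kappa> x - L) \<le> h x) (at_left (pi/2))"
      using eventually_at_left_real[of 0 "pi/2"]
    proof (rule eventually_mono)
      show "0 < pi/2" by simp
      fix x :: real assume x: "x \<in> {0<..<pi/2}"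
      then have S: "x \<in> ?S" by auto
      show "norm (\<kappa> x - L) \<le> h x" using kap[OF S] x kp_close[OF x] unfolding Lc h_def by simp
    qed
    from Lim_null_comparison[OF this hl] show ?thesis by (simp add: Lim_null[symmetric])
  qed
  have P8: "(\<kappa> \<longlongrightarrow> L) (at_right (-pi/2))"
  proof -
    have "((\<lambda>x. h (-x)) \<longlongrightarrow> h (- (-pi/2))) (at_right (-pi/2))" unfolding h_def by (intro tendsto_intros) auto
    then have hl: "((\<lambda>x. h (-x)) \<longlongrightarrow> 0) (at_right (-pi/2))" using h0 by simp
    have "eventually (\<lambda>x. norm (\<kappa> x - L) \<le> h (-x)) (at_right (-pi/2))"
      using eventually_at_right_real[of "-pi/2" 0]
    proof (rule eventually_mono)
      show "-pi/2 < 0" by simp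
      fix x :: real assume x: "x \<in> {-pi/2<..<0}"
      then have S: "x \<in> ?S" and m: "-x \<in> ?V" by auto
      show "norm (\<kappa> x - L) \<le> h (-x)" using kap[OF S] x kp_close[OF m] unfolding Lc h_def by simp
    qed
    from Lim_null_comparison[OF this hl] show ?thesis by (simp add: Lim_null[symmetric])
  qed
  have P9: "(\<lambda>\<phi>. \<bar>deriv \<kappa> \<phi>\<bar>) \<in> O[at 0](\<lambda>\<phi>. \<bar>2 + \<kappa> \<phi>\<bar> ^ 3)"
  proof (rule bigoI)
    show "eventually (\<lambda>x. norm \<bar>deriv \<kappa> x\<bar> \<le> (K3 / K2^3) * norm (\<bar>2 + \<kappa> x\<bar> ^ 3)) (at 0)"
      unfolding eventually_at
    proof (intro exI[of _ "pi/4"] conjI ballI impI)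
      show "pi/4 > (0::real)" by simp
      fix x :: real assume "x \<in> UNIV" and x: "x \<noteq> 0 \<and> dist x 0 < pi/4"
      then have ax: "\<bar>x\<bar> < pi/4" "\<bar>x\<bar> > 0" by auto
      have S: "x \<in> ?S" using ax pi_gt_zero by auto
      have "\<bar>kpd \<bar>x\<bar>\<bar> \<le> (K3 / K2^3) * \<bar>2 + kp \<bar>x\<bar>\<bar>^3"
        using ax by (intro kpd_bigO absV[OF S]) auto
      then show "norm \<bar>deriv \<kappa> x\<bar> \<le> (K3 / K2^3) * norm (\<bar>2 + \<kappa> x\<bar> ^ 3)"
        using dk[OF S] kap[OF S] by (simp add: power_abs)
    qed
  qed
  define \<epsilon> where "\<epsilon> = min (pi/6) (K2 / (2 * K5))"
  have e0: "\<epsilon> > 0" unfolding \<epsilon>_def using K2pos K5pos by simp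
  have e6: "\<epsilon> \<le> pi/6" unfolding \<epsilon>_def by (rule min.cobounded1)
  have eK: "\<epsilon> \<le> K2 / (2 * K5)" unfolding \<epsilon>_def by (rule min.cobounded2)
  have dom: "\<exists>y. (\<omega> has_real_derivative y) (at t) \<and> y > 0" if t: "0 < t" "t \<le> \<epsilon>" for t
  proof -
    have V: "t \<in> ?V" using t e6 pi_gt_zero by auto
    have c0: "cos t > 0" using V by (intro cos_gt_zero_pi) auto
    have "((\<lambda>\<phi>. (2 + \<kappa> \<phi>) / cos \<phi>) has_real_derivative
        ((0 + kpd t) * cos t - (2 + \<kappa> t) * (- sin t)) / (cos t * cos t)) (at t)"
      using c0 by (intro DERIV_divide DERIV_add DERIV_const kdpos[OF V] DERIV_cos) auto
    moreover have "\<kappa> t = kp t" using kap[of t] V by auto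
    moreover have "kpd t * cos t + (2 + kp t) * sin t > 0"
    proof (rule D_pos[OF V])
      show "t \<le> pi/6" using t e6 by simp
      have "sin t \<le> t" using t by (intro sin_x_le_x) auto
      also have "\<dots> \<le> K2 / (2 * K5)" using t eK by simp
      also have "\<dots> < K2 / K5" using K2pos K5pos by (simp add: field_simps)
      finally show "sin t < K2 / K5" .
    qed
    ultimately show ?thesis unfolding \<omega>_def using c0
      by (intro exI[of _ "((0 + kpd t) * cos t - (2 + \<kappa> t) * (- sin t)) / (cos t * cos t)"])
         (auto intro!: divide_pos_pos simp: algebra_simps)
  qed
  have mono: "mono_on {0<..\<epsilon>} \<omega>"
    unfolding monotone_on_def
  proof (intro ballI impI)
    fix x y assume x: "x \<in> {0<..\<epsilon>}" and y: "y \<in> {0<..\<epsilon>}" and le: "x \<le> y"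
    show "\<omega> x \<le> \<omega> y"
    proof (cases "x = y")
      case False
      then have "x < y" using le by simp
      then have "\<omega> x < \<omega> y"
        by (rule DERIV_pos_imp_increasing) (use x y dom in auto)
      then show ?thesis by simp
    qed simp
  qed
  have oeven: "\<omega> x = \<omega> (-x)" if "x \<in> ?S" for x
  proof -
    have "-x \<in> ?S" using that by auto
    then show ?thesis unfolding \<omega>_def using kap[OF that] kap[of "-x"] by simp
  qed
  have amono: "antimono_on {-\<epsilon>..<0} \<omega>"
    unfolding monotone_on_def
  proof (intro ballI impI)
    fix x y assume x: "x \<in> {-\<epsilon>..<0}" and y: "y \<in> {-\<epsilon>..<0}" and le: "x \<le> y"
    have Sx: "x \<in> ?S" and Sy: "y \<in> ?S" using x y e6 pi_gt_zero by auto
    have "\<omega> (-y) \<le> \<omega> (-x)" using mono x y le unfolding monotone_on_def by auto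
    then show "\<omega> y \<le> \<omega> x" using oeven[OF Sx] oeven[OF Sy] by simp
  qed
  have P10: "\<exists>\<epsilon>>0. (mono_on {-\<epsilon>..<0} \<omega> \<or> antimono_on {-\<epsilon>..<0} \<omega>)
               \<and> (mono_on {0<..\<epsilon>} \<omega> \<or> antimono_on {0<..\<epsilon>} \<omega>)"
    using e0 mono amono by blast
  show ?thesis using P1 P2 P3 P4 P5 P6 P7 P8 P9 P10 by blast
qed

end
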